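(* Consider the Gaussian location model in the context with loss $\ell(w,z)=|w-z|$ (1-Lipschitz in $w$ for the metric $|\cdot|$), hypothesis $W=\frac{1}{N_L}\sum_{i_{1:L}}\mu_L^{i_{1:L}}$ computed on the selected tree of the supersample construction. Then for every depth $l\in\{1,\dots,L\}$ and every index $i_{1:l}$, $$\mathbb{E}_{\tilde\mu_l^{i_{1:l}},U_l^{i_{1:l}}}\,\mathbb{W}\Big(P_{W\mid\tilde\mu_l^{i_{1:l}},U_l^{i_{1:l}}},P_{W\mid\tilde\mu_l^{i_{1:l}}}\Big)\le\frac{\sigma_l}{\sqrt{\pi}\,N_l},$$ where $\mathbb{W}$ is the Wasserstein-1 distance on $\mathbb R$; consequently the bound $2\sum_{l=1}^L\frac1{N_l}\sum_{i_{1:l}}\mathbb{E}\,\mathbb{W}(\cdot,\cdot)$ is at most $\frac{2}{\sqrt\pi}\sum_{l=1}^L\frac{\sigma_l}{N_l}$, and $\mathbb{E}[L(W)-\hat L(W,\mu)]\le\frac{2}{\sqrt\pi}\sum_{l=1}^L\frac{\sigma_l}{N_l}$.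
   Context: Gaussian location model. Fix $L\ge1$, branching factors $n_1,\dots,n_L\ge1$, $N_l=\prod_{k=1}^l n_k$, $\theta\in\mathbb R$ and $\sigma_1^2,\dots,\sigma_L^2>0$. Real-valued nodes: $\mu_1^{i_1}\sim\mathcal N(\theta,\sigma_1^2)$ i.i.d.; for $l\ge2$, conditionally independently $\mu_l^{i_{1:l}}\sim\mathcal N(\mu_{l-1}^{i_{1:l-1}},\sigma_l^2)$; leaves $\mu_L^{i_{1:L}}$ are data points. $L(w)=\mathbb{E}|w-Z|$ with $Z$ a fresh leaf generated independently by the same mechanism; $\hat L(w,\mu)=\frac1{N_L}\sum|w-\mu_L^{i_{1:L}}|$. Supersample construction. Independent uniform $U_l^{i_{1:l}}\in\{1,2\}$ for every node. $\tilde\mu_1^{i_1}=(\mu_{1,1}^{i_1},\mu_{1,2}^{i_1})$ with components i.i.d. $\mathcal N(\theta,\sigma_1^2)$; for $l\ge2$, $\tilde\mu_l^{i_{1:l}}=(\mu_{l,1}^{i_{1:l}},\mu_{l,2}^{i_{1:l}})$ with components conditionally i.i.d. $\mathcal N(\mu_{l-1,U_{l-1}^{i_{1:l-1}}}^{i_{1:l-1}},\sigma_l^2)$, independently across nodes. The selected nodes $\mu_l^{i_{1:l}}:=\mu_{l,U_l^{i_{1:l}}}^{i_{1:l}}$ form the training tree (with the law of the Gaussian location model) on which $W$ is computed. $P_{W\mid\tilde\mu_l^{i_{1:l}},U_l^{i_{1:l}}}$ and $P_{W\mid\tilde\mu_l^{i_{1:l}}}$ are conditional laws of $W$. *)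

theory Defs
  imports "HOL-Probability.Probability"
begin

text \<open>Indices i_{1:l} at depth l: lists of length l with i_k < n_k (0-based entries).\<close>
definition idx :: "(nat \<Rightarrow> nat) \<Rightarrow> nat \<Rightarrow> nat list set" where
  "idx n l = {is. length is = l \<and> (\<forall>k<l. is ! k < n (Suc k))}"

definition NN :: "(nat \<Rightarrow> nat) \<Rightarrow> nat \<Rightarrow> nat" where
  "NN n l = (\<Prod>k\<in>{1..l}. n k)"

definition nodes :: "(nat \<Rightarrow> nat) \<Rightarrow> nat \<Rightarrow> (nat \<times> nat list) set" where
  "nodes n L = {(l, is). 1 \<le> l \<and> l \<le> L \<and> is \<in> idx n l}"

text \<open>An outcome is a pair (xi, U): xi((l,i),j) is an i.i.d. standard normal noise for
  component j \<in> {1,2} of node (l,i); U(l,i) \<in> {1,2} is the uniform selector of node (l,i).\<close>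
type_synonym outcome = "(((nat \<times> nat list) \<times> nat) \<Rightarrow> real) \<times> ((nat \<times> nat list) \<Rightarrow> nat)"

definition supersample_space :: "(nat \<Rightarrow> nat) \<Rightarrow> nat \<Rightarrow> outcome measure" where
  "supersample_space n L =
     (PiM (nodes n L \<times> {1,2}) (\<lambda>_. density lborel std_normal_density))
     \<Otimes>\<^sub>M (PiM (nodes n L) (\<lambda>_. measure_pmf (pmf_of_set {1,2})))"

text \<open>Supersample node components mu_{l,j}^{i_{1:l}}: mu_{1,j} = theta + sigma_1 xi,
  mu_{l,j}^{i} = mu_{l-1,U_{l-1}^{parent}}^{parent} + sigma_l xi, i.e. conditionally
  N(mu_{l-1,U}^{parent}, sigma_l^2), independently across nodes and components.\<close>
fun mutil :: "real \<Rightarrow> (nat \<Rightarrow> real) \<Rightarrow> outcome \<Rightarrow> nat \<Rightarrow> nat list \<Rightarrow> nat \<Rightarrow> real" where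
  "mutil \<theta> \<sigma> \<omega> 0 is j = \<theta>"
| "mutil \<theta> \<sigma> \<omega> (Suc l) is j =
     (if l = 0 then \<theta> else mutil \<theta> \<sigma> \<omega> l (take l is) (snd \<omega> (l, take l is)))
     + \<sigma> (Suc l) * fst \<omega> ((Suc l, is), j)"

definition musel :: "real \<Rightarrow> (nat \<Rightarrow> real) \<Rightarrow> outcome \<Rightarrow> nat \<Rightarrow> nat list \<Rightarrow> real" where
  "musel \<theta> \<sigma> \<omega> l is = mutil \<theta> \<sigma> \<omega> l is (snd \<omega> (l, is))"

definition hypW :: "(nat \<Rightarrow> nat) \<Rightarrow> nat \<Rightarrow> real \<Rightarrow> (nat \<Rightarrow> real) \<Rightarrow> outcome \<Rightarrow> real" where
  "hypW n L \<theta> \<sigma> \<omega> = (1 / real (NN n L)) * (\<Sum>is\<in>idx n L. musel \<theta> \<sigma> \<omega> L is)"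

definition XU :: "real \<Rightarrow> (nat \<Rightarrow> real) \<Rightarrow> nat \<Rightarrow> nat list \<Rightarrow> outcome \<Rightarrow> (real \<times> real) \<times> nat" where
  "XU \<theta> \<sigma> l is \<omega> = ((mutil \<theta> \<sigma> \<omega> l is 1, mutil \<theta> \<sigma> \<omega> l is 2), snd \<omega> (l, is))"

definition XT :: "real \<Rightarrow> (nat \<Rightarrow> real) \<Rightarrow> nat \<Rightarrow> nat list \<Rightarrow> outcome \<Rightarrow> real \<times> real" where
  "XT \<theta> \<sigma> l is \<omega> = (mutil \<theta> \<sigma> \<omega> l is 1, mutil \<theta> \<sigma> \<omega> l is 2)"

definition SXU :: "((real \<times> real) \<times> nat) measure" where
  "SXU = (borel \<Otimes>\<^sub>M borel) \<Otimes>\<^sub>M count_space UNIV"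

definition SXT :: "(real \<times> real) measure" where
  "SXT = borel \<Otimes>\<^sub>M borel"

definition is_cond_law ::
  "'a measure \<Rightarrow> 'b measure \<Rightarrow> ('a \<Rightarrow> 'b) \<Rightarrow> ('a \<Rightarrow> real) \<Rightarrow> ('b \<Rightarrow> real measure) \<Rightarrow> bool" where
  "is_cond_law M S X Z \<kappa> \<longleftrightarrow>
     \<kappa> \<in> S \<rightarrow>\<^sub>M prob_algebra borel \<and>
     (\<forall>A\<in>sets S. \<forall>B\<in>sets borel.
        emeasure M {\<omega>\<in>space M. X \<omega> \<in> A \<and> Z \<omega> \<in> B}
        = (\<integral>\<^sup>+ x. indicator A x * emeasure (\<kappa> x) B \<partial>(distr M S X)))"

definition couplings :: "real measure \<Rightarrow> real measure \<Rightarrow> (real \<times> real) measure set" where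
  "couplings P Q = {\<pi>. sets \<pi> = sets (borel \<Otimes>\<^sub>M borel) \<and> prob_space \<pi> \<and>
       distr \<pi> borel fst = P \<and> distr \<pi> borel snd = Q}"

definition wasserstein1 :: "real measure \<Rightarrow> real measure \<Rightarrow> ennreal" where
  "wasserstein1 P Q = (INF \<pi>\<in>couplings P Q. \<integral>\<^sup>+ z. ennreal \<bar>fst z - snd z\<bar> \<partial>\<pi>)"

text \<open>Population loss L(w) = E|w - Z|, Z a fresh leaf generated by the same mechanism
  (its law is the law of any leaf of the tree, e.g. the leaf (0,...,0)).\<close>
definition popLoss :: "(nat \<Rightarrow> nat) \<Rightarrow> nat \<Rightarrow> real \<Rightarrow> (nat \<Rightarrow> real) \<Rightarrow> real \<Rightarrow> real" where
  "popLoss n L \<theta> \<sigma> w =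
     (\<integral> z. \<bar>w - z\<bar> \<partial>(distr (supersample_space n L) borel (\<lambda>\<omega>. musel \<theta> \<sigma> \<omega> L (replicate L 0))))"

definition empLoss :: "(nat \<Rightarrow> nat) \<Rightarrow> nat \<Rightarrow> real \<Rightarrow> (nat \<Rightarrow> real) \<Rightarrow> real \<Rightarrow> outcome \<Rightarrow> real" where
  "empLoss n L \<theta> \<sigma> w \<omega> = (1 / real (NN n L)) * (\<Sum>is\<in>idx n L. \<bar>w - musel \<theta> \<sigma> \<omega> L is\<bar>)"

end

theory Submission
  imports Defs
begin

abbreviation "Nd \<equiv> density lborel std_normal_density"
abbreviation "Up \<equiv> measure_pmf (pmf_of_set {1::nat,2})"

definition "UU n L = PiE (nodes n L) (\<lambda>_. {1::nat,2})"

lemma finite_idx: "finite (idx n l)"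
proof -
  have "idx n l \<subseteq> {xs. set xs \<subseteq> {..<(\<Sum>k\<le>l. n k)} \<and> length xs = l}"
  proof (auto simp: idx_def)
    fix xs x assume l: "\<forall>k<length xs. xs ! k < n (Suc k)" and x: "x \<in> set xs"
    then obtain k where k: "k < length xs" "xs ! k = x" by (auto simp: in_set_conv_nth)
    have "n (Suc k) \<le> (\<Sum>k\<le>length xs. n k)"
      using k by (intro member_le_sum) auto
    then show "x < (\<Sum>k\<le>length xs. n k)" using l k by force
  qed
  then show ?thesis by (rule finite_subset) (rule finite_lists_length_eq, simp)
qed

lemma idx_Suc: "idx n (Suc l) = (\<lambda>(xs,a). xs @ [a]) ` (idx n l \<times> {..<n (Suc l)})"
proof
  show "idx n (Suc l) \<subseteq> (\<lambda>(xs,a). xs @ [a]) ` (idx n l \<times> {..<n (Suc l)})"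
  proof
    fix xs assume "xs \<in> idx n (Suc l)"
    then have a: "length xs = Suc l" "\<forall>k<Suc l. xs ! k < n (Suc k)" by (auto simp: idx_def)
    then have xs: "xs = butlast xs @ [last xs]"
      by (metis append_butlast_last_id list.size(3) nat.distinct(1))
    have "butlast xs \<in> idx n l" using a by (auto simp: idx_def nth_butlast)
    moreover have "last xs < n (Suc l)"
    proof -
      have "last xs = xs ! l" using a(1) by (subst last_conv_nth) auto
      then show ?thesis using a(2) by auto
    qed
    ultimately show "xs \<in> (\<lambda>(xs,a). xs @ [a]) ` (idx n l \<times> {..<n (Suc l)})"
      using xs by (auto simp: image_iff intro!: bexI[of _ "(butlast xs, last xs)"])
  qed
  show "(\<lambda>(xs,a). xs @ [a]) ` (idx n l \<times> {..<n (Suc l)}) \<subseteq> idx n (Suc l)"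
    by (auto simp: idx_def nth_append less_Suc_eq)
qed


lemma card_idx: "card (idx n l) = NN n l"
proof (induction l)
  case 0
  have "idx n 0 = {[]}" by (auto simp: idx_def)
  then show ?case by (simp add: NN_def)
next
  case (Suc l)
  have "card (idx n (Suc l)) = card (idx n l \<times> {..<n (Suc l)})"
    unfolding idx_Suc by (rule card_image) (auto simp: inj_on_def)
  also have "\<dots> = NN n l * n (Suc l)" using Suc by (simp add: card_cartesian_product)
  finally show ?case by (simp add: NN_def)
qed

lemma idx_length: "is \<in> idx n l \<Longrightarrow> length is = l" by (simp add: idx_def)

lemma idx_take: "is \<in> idx n l \<Longrightarrow> k \<le> l \<Longrightarrow> take k is \<in> idx n k"
  by (auto simp: idx_def)

lemma card_prefix:
  assumes "is \<in> idx n l" "l \<le> L"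
  shows "card {i\<in>idx n L. take l i = is} * NN n l = NN n L"
  using assms(2)
proof (induction L rule: dec_induct)
  case base
  have "{i\<in>idx n l. take l i = is} = {is}" using assms(1) by (auto simp: idx_def)
  then show ?case by simp
next
  case (step L)
  have "{i\<in>idx n (Suc L). take l i = is} = (\<lambda>(xs,a). xs @ [a]) ` ({i\<in>idx n L. take l i = is} \<times> {..<n (Suc L)})"
    unfolding idx_Suc using step(1) by (auto simp: image_iff idx_def)
  then have "card {i\<in>idx n (Suc L). take l i = is} = card {i\<in>idx n L. take l i = is} * n (Suc L)"
    by (simp add: card_image inj_on_def card_cartesian_product)
  then show ?case using step by (simp add: NN_def)
qed

lemma NN_pos: "(\<And>k. k \<in> {1..L} \<Longrightarrow> n k \<ge> 1) \<Longrightarrow> l \<le> L \<Longrightarrow> NN n l > 0"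
proof -
  assume h: "\<And>k. k \<in> {1..L} \<Longrightarrow> n k \<ge> 1" and l: "l \<le> L"
  have "\<forall>k\<in>{1..l}. 0 < n k"
  proof
    fix k assume "k \<in> {1..l}"
    then have "k \<in> {1..L}" using l by auto
    then show "0 < n k" using h by fastforce
  qed
  then show ?thesis unfolding NN_def by (intro prod_pos) auto
qed

lemma finite_nodes: "finite (nodes n L)"
proof -
  have "nodes n L = (\<Union>l\<in>{1..L}. Pair l ` idx n l)" by (auto simp: nodes_def)
  then show ?thesis by (simp add: finite_idx)
qed

lemma finite_UU: "finite (UU n L)"
  unfolding UU_def by (intro finite_PiE finite_nodes) auto

lemma card_UU: "card (UU n L) = 2 ^ card (nodes n L)"
  unfolding UU_def by (simp add: card_PiE finite_nodes numeral_2_eq_2)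

lemma MU_nn_integral:
  fixes J :: "'a set" and f :: "('a \<Rightarrow> nat) \<Rightarrow> ennreal"
  assumes J: "finite J"
  shows "(\<integral>\<^sup>+u. f u \<partial>PiM J (\<lambda>_. Up)) = (\<Sum>u\<in>PiE J (\<lambda>_. {1,2}). f u) * ennreal ((1/2)^card J)"
proof -
  interpret P: product_prob_space "\<lambda>_::'a. Up" by unfold_locales
  let ?U = "PiE J (\<lambda>_. {1::nat,2})"
  have finU: "finite ?U" using J by (intro finite_PiE) auto
  have sU: "?U \<in> sets (PiM J (\<lambda>_. Up))" by (intro sets_PiM_I_finite J) auto
  have "emeasure (PiM J (\<lambda>_. Up)) ?U = (\<Prod>i\<in>J. emeasure Up {1,2})"
    by (rule P.emeasure_PiM[OF J]) auto
  also have "\<dots> = 1" by (simp add: measure_pmf.emeasure_eq_1_AE AE_measure_pmf_iff)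
  finally have "emeasure (PiM J (\<lambda>_. Up)) ?U = 1" .
  then have AE: "AE u in PiM J (\<lambda>_. Up). u \<in> ?U"
    using sU by (intro prob_space.AE_prob_1[OF prob_space_PiM[OF measure_pmf.prob_space_axioms]]) (auto simp: measure_def)
  have single: "{u} = PiE J (\<lambda>j. {u j})" if "u \<in> ?U" for u
    using that by (auto simp: PiE_iff extensional_def fun_eq_iff) metis
  have "(\<integral>\<^sup>+u. f u \<partial>PiM J (\<lambda>_. Up)) = (\<integral>\<^sup>+u. f u * indicator ?U u \<partial>PiM J (\<lambda>_. Up))"
    using AE by (intro nn_integral_cong_AE) auto
  also have "\<dots> = (\<Sum>u\<in>?U. f u * emeasure (PiM J (\<lambda>_. Up)) {u})"
    using finU by (intro nn_integral_indicator_finite) (auto simp: single intro!: sets_PiM_I_finite J)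
  also have "\<dots> = (\<Sum>u\<in>?U. f u * ennreal ((1/2)^card J))"
  proof (intro sum.cong refl arg_cong2[where f="(*)"])
    fix u assume u: "u \<in> ?U"
    have "emeasure (PiM J (\<lambda>_. Up)) {u} = (\<Prod>i\<in>J. emeasure Up {u i})"
      unfolding single[OF u] by (rule P.emeasure_PiM[OF J]) auto
    also have "\<dots> = (\<Prod>i\<in>J. ennreal (1/2))"
      using u by (intro prod.cong refl) (auto simp: emeasure_pmf_of_set PiE_iff divide_ennreal)
    also have "\<dots> = ennreal (\<Prod>i\<in>J. 1/2)" by (rule prod_ennreal) simp
    also have "\<dots> = ennreal ((1/2)^card J)" by simp
    finally show "emeasure (PiM J (\<lambda>_. Up)) {u} = ennreal ((1/2)^card J)" .
  qed
  also have "\<dots> = (\<Sum>u\<in>?U. f u) * ennreal ((1/2)^card J)" by (simp add: sum_distrib_right)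
  finally show ?thesis .
qed


definition "IX n L = nodes n L \<times> {1::nat,2}"
definition "MX n L = PiM (IX n L) (\<lambda>_. Nd)"
definition "MU n L = PiM (nodes n L) (\<lambda>_. Up)"

lemma SS_eq: "supersample_space n L = MX n L \<Otimes>\<^sub>M MU n L"
  by (simp add: supersample_space_def MX_def MU_def IX_def)

lemma prob_Nd: "prob_space Nd" by (rule prob_space_normal_density) simp

lemma prob_MX: "prob_space (MX n L)"
  unfolding MX_def by (intro prob_space_PiM prob_Nd)

lemma prob_MU: "prob_space (MU n L)"
  unfolding MU_def by (intro prob_space_PiM measure_pmf.prob_space_axioms)

lemma prob_SS: "prob_space (supersample_space n L)"
  unfolding SS_eq using prob_MX prob_MU by (intro prob_space_pair)

lemma pair_SS: "pair_sigma_finite (MX n L) (MU n L)"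
  using prob_MX prob_MU
  by (intro pair_sigma_finite.intro prob_space_imp_sigma_finite)

lemma finite_IX: "finite (IX n L)" by (simp add: IX_def finite_nodes)

lemma space_MX: "space (MX n L) = PiE (IX n L) (\<lambda>_. UNIV)"
  by (simp add: MX_def space_PiM)

lemma space_MU: "space (MU n L) = PiE (nodes n L) (\<lambda>_. UNIV)"
  by (simp add: MU_def space_PiM)

lemma space_SS: "space (supersample_space n L) = space (MX n L) \<times> space (MU n L)"
  by (simp add: SS_eq space_pair_measure)

lemma SS_nn:
  assumes h: "h \<in> borel_measurable (supersample_space n L)"
  shows "(\<integral>\<^sup>+\<omega>. h \<omega> \<partial>supersample_space n L)
     = (\<Sum>u\<in>UU n L. \<integral>\<^sup>+x. h (x,u) \<partial>MX n L) * ennreal ((1/2)^card (nodes n L))"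
proof -
  interpret pair_sigma_finite "MX n L" "MU n L" by (rule pair_SS)
  have "(\<integral>\<^sup>+\<omega>. h \<omega> \<partial>supersample_space n L) = (\<integral>\<^sup>+u. (\<integral>\<^sup>+x. h (x,u) \<partial>MX n L) \<partial>MU n L)"
    using h unfolding SS_eq by (subst nn_integral_snd[symmetric]) auto
  also have "\<dots> = (\<Sum>u\<in>UU n L. \<integral>\<^sup>+x. h (x,u) \<partial>MX n L) * ennreal ((1/2)^card (nodes n L))"
    unfolding MU_def UU_def by (rule MU_nn_integral[OF finite_nodes])
  finally show ?thesis .
qed

lemma fst_undef: "\<omega> \<in> space (supersample_space n L) \<Longrightarrow> c \<notin> IX n L \<Longrightarrow> fst \<omega> c = undefined"
  unfolding space_SS space_MX by (cases \<omega>) (auto simp: PiE_def extensional_def, metis prod.collapse)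

lemma snd_undef: "\<omega> \<in> space (supersample_space n L) \<Longrightarrow> c \<notin> nodes n L \<Longrightarrow> snd \<omega> c = undefined"
  unfolding space_SS space_MU by (cases \<omega>) (auto simp: PiE_def extensional_def, metis prod.collapse)

lemma sets_Nd[simp, measurable_cong]: "sets Nd = sets borel" by simp

lemma coordX[measurable]: "(\<lambda>\<omega>. fst \<omega> c) \<in> borel_measurable (supersample_space n L)"
proof (cases "c \<in> IX n L")
  case True
  have "(\<lambda>x. x c) \<in> borel_measurable (MX n L)"
    unfolding MX_def using measurable_component_singleton[OF True, of "\<lambda>_. Nd"]
    by (simp cong: measurable_cong_sets)
  then show ?thesis unfolding SS_eq by measurable
next
  case False
  have "(\<lambda>\<omega>. fst \<omega> c) \<in> borel_measurable (supersample_space n L) \<longleftrightarrow> (\<lambda>\<omega>. undefined::real) \<in> borel_measurable (supersample_space n L)"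
    using False by (intro measurable_cong) (simp add: fst_undef)
  then show ?thesis by simp
qed

lemma coordU[measurable]: "(\<lambda>\<omega>. snd \<omega> c) \<in> supersample_space n L \<rightarrow>\<^sub>M count_space UNIV"
proof (cases "c \<in> nodes n L")
  case True
  have "(\<lambda>x. x c) \<in> MU n L \<rightarrow>\<^sub>M count_space UNIV"
    unfolding MU_def using measurable_component_singleton[OF True, of "\<lambda>_. Up"]
    by (simp cong: measurable_cong_sets)
  then show ?thesis unfolding SS_eq by measurable
next
  case False
  have "(\<lambda>\<omega>. snd \<omega> c) \<in> supersample_space n L \<rightarrow>\<^sub>M count_space UNIV \<longleftrightarrow> (\<lambda>\<omega>. undefined::nat) \<in> supersample_space n L \<rightarrow>\<^sub>M count_space UNIV"
    using False by (intro measurable_cong) (simp add: snd_undef)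
  then show ?thesis by simp
qed

lemma mutil_meas[measurable]: "(\<lambda>\<omega>. mutil \<theta> \<sigma> \<omega> l i j) \<in> borel_measurable (supersample_space n L)"
proof (induction l arbitrary: i j)
  case 0
  then show ?case by simp
next
  case (Suc l)
  have "(\<lambda>\<omega>. mutil \<theta> \<sigma> \<omega> l (take l i) (snd \<omega> (l, take l i))) \<in> borel_measurable (supersample_space n L)"
    by (rule measurable_compose_countable[where f="\<lambda>j \<omega>. mutil \<theta> \<sigma> \<omega> l (take l i) j", OF Suc coordU])
  then show ?case by simp
qed

lemma musel_meas[measurable]: "(\<lambda>\<omega>. musel \<theta> \<sigma> \<omega> l i) \<in> borel_measurable (supersample_space n L)"
  unfolding musel_def
  by (rule measurable_compose_countable[where f="\<lambda>j \<omega>. mutil \<theta> \<sigma> \<omega> l i j", OF mutil_meas coordU])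

lemma hypW_meas[measurable]: "hypW n L \<theta> \<sigma> \<in> borel_measurable (supersample_space n L)"
  unfolding hypW_def by measurable


definition fl :: "(nat \<times> nat list) \<Rightarrow> outcome \<Rightarrow> outcome" where
  "fl c \<omega> = (fst \<omega>, (snd \<omega>)(c := 3 - snd \<omega> c))"

lemma fl_meas[measurable]:
  assumes c: "c \<in> nodes n L"
  shows "fl c \<in> supersample_space n L \<rightarrow>\<^sub>M supersample_space n L"
proof -
  have f: "fst \<in> supersample_space n L \<rightarrow>\<^sub>M MX n L" unfolding SS_eq by simp
  have g: "(\<lambda>\<omega>. (snd \<omega>)(c := 3 - snd \<omega> c)) \<in> supersample_space n L \<rightarrow>\<^sub>M MU n L"
    unfolding MU_def
  proof (rule measurable_PiM_single')
    fix i assume "i \<in> nodes n L"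
    have "(\<lambda>\<omega>. if i = c then 3 - snd \<omega> c else snd \<omega> i) \<in> supersample_space n L \<rightarrow>\<^sub>M count_space UNIV"
      by measurable
    then show "(\<lambda>\<omega>. ((snd \<omega>)(c := 3 - snd \<omega> c)) i) \<in> supersample_space n L \<rightarrow>\<^sub>M Up"
      by (simp cong: measurable_cong_sets)
  next
    show "(\<lambda>\<omega> i. ((snd \<omega>)(c := 3 - snd \<omega> c)) i) \<in> space (supersample_space n L) \<rightarrow> (\<Pi>\<^sub>E i\<in>nodes n L. space Up)"
      using c by (auto simp: space_SS space_MU PiE_def extensional_def)
  qed
  show ?thesis unfolding fl_def using f g by (subst SS_eq) (rule measurable_Pair)
qed

lemma bij_flipU:
  assumes c: "c \<in> nodes n L"
  shows "bij_betw (\<lambda>u. u(c := 3 - u c)) (UU n L) (UU n L)"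
proof (rule bij_betwI[where g="\<lambda>u. u(c := 3 - u c)"])
  show "(\<lambda>u. u(c := 3 - u c)) \<in> UU n L \<rightarrow> UU n L"
  proof
    fix u assume u: "u \<in> UU n L"
    then have uc: "u c = 1 \<or> u c = 2" using c by (auto simp: UU_def PiE_iff)
    show "u(c := 3 - u c) \<in> UU n L" using u uc c by (auto simp: UU_def PiE_iff extensional_def)
  qed
  then show "(\<lambda>u. u(c := 3 - u c)) \<in> UU n L \<rightarrow> UU n L" .
  fix u assume "u \<in> UU n L"
  then have "u c \<in> {1,2}" using c by (auto simp: UU_def PiE_iff)
  then show "(u(c := 3 - u c))(c := 3 - (u(c := 3 - u c)) c) = u"
    by (auto simp: fun_eq_iff)
  then show "(u(c := 3 - u c))(c := 3 - (u(c := 3 - u c)) c) = u" .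
qed

lemma fl_nn:
  assumes c: "c \<in> nodes n L" and h[measurable]: "h \<in> borel_measurable (supersample_space n L)"
  shows "(\<integral>\<^sup>+\<omega>. h (fl c \<omega>) \<partial>supersample_space n L) = (\<integral>\<^sup>+\<omega>. h \<omega> \<partial>supersample_space n L)"
proof -
  have hm: "(\<lambda>\<omega>. h (fl c \<omega>)) \<in> borel_measurable (supersample_space n L)"
    using c by measurable
  have "(\<integral>\<^sup>+\<omega>. h (fl c \<omega>) \<partial>supersample_space n L)
     = (\<Sum>u\<in>UU n L. \<integral>\<^sup>+x. h (x, u(c := 3 - u c)) \<partial>MX n L) * ennreal ((1/2)^card (nodes n L))"
    by (subst SS_nn[OF hm]) (simp add: fl_def)
  also have "(\<Sum>u\<in>UU n L. \<integral>\<^sup>+x. h (x, u(c := 3 - u c)) \<partial>MX n L) = (\<Sum>u\<in>UU n L. \<integral>\<^sup>+x. h (x, u) \<partial>MX n L)"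
    by (rule sum.reindex_bij_betw[OF bij_flipU[OF c], where g="\<lambda>u. \<integral>\<^sup>+x. h (x, u) \<partial>MX n L"])
  finally show ?thesis by (simp add: SS_nn[OF h])
qed

lemma fl_distr:
  assumes c: "c \<in> nodes n L"
  shows "distr (supersample_space n L) (supersample_space n L) (fl c) = supersample_space n L"
proof (rule measure_eqI)
  fix A assume A: "A \<in> sets (distr (supersample_space n L) (supersample_space n L) (fl c))"
  then have A': "A \<in> sets (supersample_space n L)" by simp
  have "emeasure (distr (supersample_space n L) (supersample_space n L) (fl c)) A
      = emeasure (supersample_space n L) (fl c -` A \<inter> space (supersample_space n L))"
    using A' c by (intro emeasure_distr) auto
  also have "\<dots> = (\<integral>\<^sup>+\<omega>. indicator (fl c -` A \<inter> space (supersample_space n L)) \<omega> \<partial>supersample_space n L)"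
    using A' c by (intro nn_integral_indicator[symmetric] measurable_sets[OF fl_meas])
  also have "\<dots> = (\<integral>\<^sup>+\<omega>. indicator A (fl c \<omega>) \<partial>supersample_space n L)"
    by (intro nn_integral_cong) (auto simp: indicator_def)
  also have "\<dots> = (\<integral>\<^sup>+\<omega>. indicator A \<omega> \<partial>supersample_space n L)"
    using A' c by (intro fl_nn) auto
  finally show "emeasure (distr (supersample_space n L) (supersample_space n L) (fl c)) A = emeasure (supersample_space n L) A"
    using A' by simp
qed simp

lemma AE_U12:
  assumes c: "c \<in> nodes n L"
  shows "AE \<omega> in supersample_space n L. snd \<omega> c \<in> {1,2}"
proof -
  let ?S = "{\<omega>\<in>space (supersample_space n L). snd \<omega> c \<notin> {1,2}}"
  have S: "?S \<in> sets (supersample_space n L)"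
  proof -
    have "?S = (\<lambda>\<omega>. snd \<omega> c) -` (UNIV - {1,2}) \<inter> space (supersample_space n L)" by auto
    also have "\<dots> \<in> sets (supersample_space n L)" by (rule measurable_sets[OF coordU]) simp
    finally show ?thesis .
  qed
  have "emeasure (supersample_space n L) ?S = (\<integral>\<^sup>+\<omega>. indicator ?S \<omega> \<partial>supersample_space n L)"
    using S by simp
  also have "\<dots> = (\<Sum>u\<in>UU n L. \<integral>\<^sup>+x. indicator ?S (x,u) \<partial>MX n L) * ennreal ((1/2)^card (nodes n L))"
    using S by (intro SS_nn) simp
  also have "(\<Sum>u\<in>UU n L. \<integral>\<^sup>+x. indicator ?S (x,u) \<partial>MX n L) = 0"
    using c by (intro sum.neutral ballI) (auto simp: UU_def PiE_iff indicator_def)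
  finally show ?thesis using S by (intro AE_I[where N="?S"]) auto
qed

lemma AE_U12_all: "AE \<omega> in supersample_space n L. \<forall>c\<in>nodes n L. snd \<omega> c \<in> {1,2}"
  by (rule AE_finite_allI[OF finite_nodes]) (rule AE_U12)


definition sel :: "outcome \<Rightarrow> nat \<Rightarrow> nat list \<Rightarrow> real" where
  "sel \<omega> k i = fst \<omega> ((k, take k i), snd \<omega> (k, take k i))"

lemma mutil_formula:
  "1 \<le> l \<Longrightarrow> mutil \<theta> \<sigma> \<omega> l i j = \<theta> + (\<Sum>k\<in>{1..<l}. \<sigma> k * sel \<omega> k i) + \<sigma> l * fst \<omega> ((l,i),j)"
proof (induction l arbitrary: i j)
  case 0 thus ?case by simp
next
  case (Suc l)
  show ?case
  proof (cases "l = 0")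
    case True thus ?thesis by simp
  next
    case False
    then have IH: "mutil \<theta> \<sigma> \<omega> l (take l i) (snd \<omega> (l, take l i)) = \<theta> + (\<Sum>k\<in>{1..<l}. \<sigma> k * sel \<omega> k (take l i)) + \<sigma> l * fst \<omega> ((l, take l i), snd \<omega> (l, take l i))"
      using Suc.IH by simp
    have 1: "(\<Sum>k\<in>{1..<l}. \<sigma> k * sel \<omega> k (take l i)) = (\<Sum>k\<in>{1..<l}. \<sigma> k * sel \<omega> k i)"
      by (intro sum.cong) (auto simp: sel_def min_def)
    have 2: "\<sigma> l * fst \<omega> ((l, take l i), snd \<omega> (l, take l i)) = \<sigma> l * sel \<omega> l i" by (simp add: sel_def)
    have 3: "(\<Sum>k\<in>{1..<Suc l}. \<sigma> k * sel \<omega> k i) = (\<Sum>k\<in>{1..<l}. \<sigma> k * sel \<omega> k i) + \<sigma> l * sel \<omega> l i"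
      using False by (subst sum.atLeastLessThan_Suc) auto
    show ?thesis using False IH 1 2 3 by simp
  qed
qed

lemma musel_formula:
  assumes "length i = l" "1 \<le> l"
  shows "musel \<theta> \<sigma> \<omega> l i = \<theta> + (\<Sum>k\<in>{1..l}. \<sigma> k * sel \<omega> k i)"
proof -
  have "musel \<theta> \<sigma> \<omega> l i = \<theta> + (\<Sum>k\<in>{1..<l}. \<sigma> k * sel \<omega> k i) + \<sigma> l * sel \<omega> l i"
    using assms by (simp add: musel_def mutil_formula sel_def)
  also have "\<dots> = \<theta> + (\<Sum>k\<in>{1..l}. \<sigma> k * sel \<omega> k i)"
    using assms by (simp add: atLeastLessThanSuc_atLeastAtMost[symmetric] sum.atLeastLessThan_Suc)
  finally show ?thesis .
qed

lemma sel_fl: "length ix = l \<Longrightarrow> sel (fl (l,ix) \<omega>) k i =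
   (if k = l \<and> take l i = ix then fst \<omega> ((l,ix), 3 - snd \<omega> (l,ix)) else sel \<omega> k i)"
  by (auto simp: sel_def fl_def)

lemma mutil_fl_same:
  assumes "length ix = l" "k \<le> l"
  shows "mutil \<theta> \<sigma> (fl (l,ix) \<omega>) k i j = mutil \<theta> \<sigma> \<omega> k i j"
proof (cases "k = 0")
  case True thus ?thesis by simp
next
  case False
  have "(\<Sum>k'\<in>{1..<k}. \<sigma> k' * sel (fl (l,ix) \<omega>) k' i) = (\<Sum>k'\<in>{1..<k}. \<sigma> k' * sel \<omega> k' i)"
    using assms by (intro sum.cong) (auto simp: sel_fl)
  then show ?thesis using False by (simp add: mutil_formula) (simp add: fl_def)
qed

lemma musel_fl:
  assumes "length ix = l" "1 \<le> L" "length i = L"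
  shows "musel \<theta> \<sigma> (fl (l,ix) \<omega>) L i = musel \<theta> \<sigma> \<omega> L i +
     (if l \<in> {1..L} \<and> take l i = ix then \<sigma> l * (fst \<omega> ((l,ix), 3 - snd \<omega> (l,ix)) - fst \<omega> ((l,ix), snd \<omega> (l,ix))) else 0)"
proof -
  let ?D = "\<sigma> l * (fst \<omega> ((l,ix), 3 - snd \<omega> (l,ix)) - fst \<omega> ((l,ix), snd \<omega> (l,ix)))"
  have eq: "\<sigma> k * sel (fl (l,ix) \<omega>) k i = \<sigma> k * sel \<omega> k i + (if k = l then (if take l i = ix then ?D else 0) else 0)" for k
  proof (cases "k = l \<and> take l i = ix")
    case True
    then have "sel \<omega> k i = fst \<omega> ((l,ix), snd \<omega> (l,ix))" by (simp add: sel_def)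
    then show ?thesis using True assms(1) by (simp add: sel_fl right_diff_distrib)
  next
    case False
    then show ?thesis using assms(1) by (auto simp: sel_fl)
  qed
  have "musel \<theta> \<sigma> (fl (l,ix) \<omega>) L i = \<theta> + (\<Sum>k\<in>{1..L}. \<sigma> k * sel (fl (l,ix) \<omega>) k i)"
    using assms by (simp add: musel_formula)
  also have "\<dots> = \<theta> + (\<Sum>k\<in>{1..L}. \<sigma> k * sel \<omega> k i) + (\<Sum>k\<in>{1..L}. (if k = l then (if take l i = ix then ?D else 0) else 0))"
    unfolding eq by (simp add: sum.distrib)
  also have "(\<Sum>k\<in>{1..L}. (if k = l then (if take l i = ix then ?D else 0) else 0)) = (if l \<in> {1..L} \<and> take l i = ix then ?D else 0)"
    by (subst sum.delta) auto
  finally show ?thesis using assms by (simp add: musel_formula)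
qed

lemma hypW_fl:
  assumes ix: "ix \<in> idx n l" and l: "l \<in> {1..L}" and n_pos: "\<And>k. k \<in> {1..L} \<Longrightarrow> n k \<ge> 1"
  shows "hypW n L \<theta> \<sigma> (fl (l,ix) \<omega>) = hypW n L \<theta> \<sigma> \<omega> +
     \<sigma> l * (fst \<omega> ((l,ix), 3 - snd \<omega> (l,ix)) - fst \<omega> ((l,ix), snd \<omega> (l,ix))) / real (NN n l)"
proof -
  define D where "D = \<sigma> l * (fst \<omega> ((l,ix), 3 - snd \<omega> (l,ix)) - fst \<omega> ((l,ix), snd \<omega> (l,ix)))"
  define C where "C = {i\<in>idx n L. take l i = ix}"
  have len: "length ix = l" using ix by (simp add: idx_def)
  have "(\<Sum>i\<in>idx n L. musel \<theta> \<sigma> (fl (l,ix) \<omega>) L i) = (\<Sum>i\<in>idx n L. musel \<theta> \<sigma> \<omega> L i + (if take l i = ix then D else 0))"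
  proof (intro sum.cong refl)
    fix i assume "i \<in> idx n L"
    then have "length i = L" by (simp add: idx_def)
    then show "musel \<theta> \<sigma> (fl (l,ix) \<omega>) L i = musel \<theta> \<sigma> \<omega> L i + (if take l i = ix then D else 0)"
      using l len unfolding D_def by (subst musel_fl) auto
  qed
  also have "\<dots> = (\<Sum>i\<in>idx n L. musel \<theta> \<sigma> \<omega> L i) + (\<Sum>i\<in>idx n L. (if take l i = ix then D else 0))"
    by (rule sum.distrib)
  also have "(\<Sum>i\<in>idx n L. (if take l i = ix then D else 0)) = (\<Sum>i\<in>C. D)"
    unfolding C_def using sum.inter_filter[OF finite_idx, where g="\<lambda>_. D" and P="\<lambda>i. take l i = ix"] by simp
  also have "\<dots> = real (card C) * D" by simp
  finally have S: "(\<Sum>i\<in>idx n L. musel \<theta> \<sigma> (fl (l,ix) \<omega>) L i) = (\<Sum>i\<in>idx n L. musel \<theta> \<sigma> \<omega> L i) + real (card C) * D" .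
  have "card C * NN n l = NN n L" unfolding C_def using card_prefix[OF ix] l by simp
  then have cp: "real (card C) * real (NN n l) = real (NN n L)" by (metis of_nat_mult)
  have pl: "real (NN n l) > 0" "real (NN n L) > 0" using NN_pos[OF n_pos] l by auto
  have "(1 / real (NN n L)) * (real (card C) * D) = D / real (NN n l)"
    using cp pl by (simp add: field_simps)
  then show ?thesis unfolding hypW_def S D_def[symmetric] by (simp only: distrib_left)
qed


lemma MX_indep:
  assumes c: "c \<in> nodes n L"
  shows "prob_space.indep_var (MX n L) borel (\<lambda>x. x (c,1)) borel (\<lambda>x. x (c,2))"
proof -
  interpret P: prob_space "MX n L" by (rule prob_MX)
  define f where "f b = (c, if b then 1 else 2::nat)" for b :: bool
  have fI: "f \<in> UNIV \<rightarrow> IX n L" using c by (auto simp: f_def IX_def)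
  have finj: "inj_on f UNIV" by (auto simp: f_def inj_on_def split: if_splits)
  have comp: "distr (MX n L) borel (\<lambda>x. x (f b)) = Nd" for b
  proof -
    have "distr (MX n L) borel (\<lambda>x. x (f b)) = distr (MX n L) Nd (\<lambda>x. x (f b))"
      by (rule distr_cong) auto
    also have "\<dots> = Nd" unfolding MX_def
      using fI by (intro distr_PiM_component prob_Nd) auto
    finally show ?thesis .
  qed
  have rv: "(\<lambda>x. x (f b)) \<in> borel_measurable (MX n L)" for b
  proof -
    have "(\<lambda>x. x (f b)) \<in> MX n L \<rightarrow>\<^sub>M Nd" unfolding MX_def
      using fI by (intro measurable_component_singleton) auto
    then show ?thesis by (simp cong: measurable_cong_sets)
  qed
  have "P.indep_vars (\<lambda>_. borel) (\<lambda>b x. x (f b)) UNIV"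
  proof (subst P.indep_vars_iff_distr_eq_PiM')
    have "distr (MX n L) (PiM UNIV (\<lambda>_. borel)) (\<lambda>x. \<lambda>b\<in>UNIV. x (f b))
        = distr (MX n L) (PiM UNIV (\<lambda>_. Nd)) (\<lambda>x. \<lambda>b\<in>UNIV. x (f b))"
      by (intro distr_cong refl sets_PiM_cong) auto
    also have "\<dots> = PiM UNIV (\<lambda>_. Nd)" unfolding MX_def
      using distr_PiM_reindex[of "IX n L" "\<lambda>_. Nd" f UNIV] fI finj prob_Nd by simp
    also have "\<dots> = PiM UNIV (\<lambda>b. distr (MX n L) borel (\<lambda>x. x (f b)))"
      by (simp add: comp)
    finally show "distr (MX n L) (PiM UNIV (\<lambda>_. borel)) (\<lambda>x. \<lambda>b\<in>UNIV. x (f b)) = PiM UNIV (\<lambda>b. distr (MX n L) borel (\<lambda>x. x (f b)))" .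
  qed (auto simp: rv)
  then show ?thesis unfolding P.indep_var_def
    by (rule P.indep_vars_cong[THEN iffD1, rotated 3]) (auto simp: f_def split: bool.split)
qed

lemma MX_coord_distributed:
  assumes c: "d \<in> IX n L"
  shows "distributed (MX n L) lborel (\<lambda>x. x d) (normal_density 0 1)"
proof -
  have "distr (MX n L) lborel (\<lambda>x. x d) = distr (MX n L) Nd (\<lambda>x. x d)"
    by (rule distr_cong) auto
  also have "\<dots> = Nd" unfolding MX_def using c by (intro distr_PiM_component prob_Nd) auto
  finally have 1: "distr (MX n L) lborel (\<lambda>x. x d) = density lborel (\<lambda>x. ennreal (normal_density 0 1 x))" .
  have "(\<lambda>x. x d) \<in> MX n L \<rightarrow>\<^sub>M Nd" unfolding MX_def
    using c by (intro measurable_component_singleton) auto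
  then have 2: "(\<lambda>x. x d) \<in> MX n L \<rightarrow>\<^sub>M lborel" by (simp cong: measurable_cong_sets)
  show ?thesis unfolding distributed_def using 1 2 by auto
qed

lemma MX_absdiff:
  assumes c: "c \<in> nodes n L"
  shows "(\<integral>\<^sup>+x. ennreal \<bar>x (c,1) - x (c,2)\<bar> \<partial>MX n L) = ennreal (2 / sqrt pi)"
proof -
  interpret P: prob_space "MX n L" by (rule prob_MX)
  have d1: "(c,1) \<in> IX n L" "(c,2) \<in> IX n L" using c by (auto simp: IX_def)
  have D: "distributed (MX n L) lborel (\<lambda>x. x (c,1) - x (c,2)) (normal_density (0 - 0) (sqrt (1\<^sup>2 + 1\<^sup>2)))"
    by (rule P.diff_indep_normal[OF MX_indep[OF c] _ _ MX_coord_distributed[OF d1(1)] MX_coord_distributed[OF d1(2)]]) auto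
  then have D': "distr (MX n L) lborel (\<lambda>x. x (c,1) - x (c,2)) = density lborel (\<lambda>z. ennreal (normal_density 0 (sqrt 2) z))"
    and meas: "(\<lambda>x. x (c,1) - x (c,2)) \<in> MX n L \<rightarrow>\<^sub>M lborel"
    by (auto simp: distributed_def)
  have "(\<integral>\<^sup>+x. ennreal \<bar>x (c,1) - x (c,2)\<bar> \<partial>MX n L) = (\<integral>\<^sup>+z. ennreal \<bar>z\<bar> \<partial>distr (MX n L) lborel (\<lambda>x. x (c,1) - x (c,2)))"
    using meas by (subst nn_integral_distr) auto
  also have "\<dots> = (\<integral>\<^sup>+z. ennreal (normal_density 0 (sqrt 2) z) * ennreal \<bar>z\<bar> \<partial>lborel)"
    unfolding D' by (subst nn_integral_density) auto
  also have "\<dots> = (\<integral>\<^sup>+z. ennreal (normal_density 0 (sqrt 2) z * \<bar>z\<bar>) \<partial>lborel)"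
    by (intro nn_integral_cong) (simp add: ennreal_mult normal_density_nonneg)
  also have "\<dots> = ennreal (2^0 * (sqrt 2)^(2*0+1) * fact 0 * sqrt (2 / pi))"
  proof -
    have hb: "has_bochner_integral lborel (\<lambda>z. normal_density 0 (sqrt 2) z * \<bar>z\<bar>) (2^0 * (sqrt 2)^(2*0+1) * fact 0 * sqrt (2 / pi))"
      using normal_moment_abs_odd[where \<mu>=0 and \<sigma>="sqrt 2" and k=0] by simp
    show ?thesis
      using hb by (subst nn_integral_eq_integral) (auto simp: has_bochner_integral_iff normal_density_nonneg)
  qed
  also have "2^0 * (sqrt 2)^(2*0+1) * fact 0 * sqrt (2 / pi) = 2 / sqrt pi"
    by (simp add: real_sqrt_divide)
  finally show ?thesis .
qed

lemma SS_absdiff: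
  assumes c: "c \<in> nodes n L"
  shows "(\<integral>\<^sup>+\<omega>. ennreal \<bar>fst \<omega> (c,1) - fst \<omega> (c,2)\<bar> \<partial>supersample_space n L) = ennreal (2 / sqrt pi)"
proof -
  interpret pair_sigma_finite "MX n L" "MU n L" by (rule pair_SS)
  interpret U: prob_space "MU n L" by (rule prob_MU)
  have m: "(\<lambda>x. ennreal \<bar>x (c,1) - x (c,2)\<bar>) \<in> borel_measurable (MX n L)"
  proof -
    have "(\<lambda>\<omega>. ennreal \<bar>fst \<omega> (c,1) - fst \<omega> (c,2)\<bar>) \<in> borel_measurable (supersample_space n L)" by measurable
    have "(\<lambda>x. x (c,1)) \<in> borel_measurable (MX n L)" "(\<lambda>x. x (c,2)) \<in> borel_measurable (MX n L)"
      using MX_coord_distributed[of "(c,1)" n L] MX_coord_distributed[of "(c,2)" n L] c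
      by (auto simp: distributed_def IX_def cong: measurable_cong_sets)
    then show ?thesis by measurable
  qed
  have "(\<integral>\<^sup>+\<omega>. ennreal \<bar>fst \<omega> (c,1) - fst \<omega> (c,2)\<bar> \<partial>supersample_space n L)
      = (\<integral>\<^sup>+u. (\<integral>\<^sup>+x. ennreal \<bar>x (c,1) - x (c,2)\<bar> \<partial>MX n L) \<partial>MU n L)"
    unfolding SS_eq using m by (subst nn_integral_snd[symmetric]) (auto simp: measurable_fst'')
  also have "\<dots> = ennreal (2 / sqrt pi)" using MX_absdiff[OF c] by (simp add: U.emeasure_space_1)
  finally show ?thesis .
qed


lemma cond_law_kernel: "is_cond_law M S X Z \<kappa> \<Longrightarrow> \<kappa> \<in> S \<rightarrow>\<^sub>M prob_algebra borel"
  by (simp add: is_cond_law_def)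

lemma kernel_props:
  assumes "\<kappa> \<in> S \<rightarrow>\<^sub>M prob_algebra borel" "x \<in> space S"
  shows "prob_space (\<kappa> x)" "sets (\<kappa> x) = sets borel" "space (\<kappa> x) = UNIV"
proof -
  have "\<kappa> x \<in> space (prob_algebra borel)" using assms by (rule measurable_space)
  then show "prob_space (\<kappa> x)" "sets (\<kappa> x) = sets borel" by (auto simp: space_prob_algebra)
  then show "space (\<kappa> x) = UNIV" by (metis sets_eq_imp_space_eq space_borel)
qed

lemma cond_law_joint:
  fixes M :: "'w measure" and S :: "'a measure"
  assumes P: "prob_space M" and cl: "is_cond_law M S X Z \<kappa>"
    and X[measurable]: "X \<in> M \<rightarrow>\<^sub>M S" and Z[measurable]: "Z \<in> borel_measurable M"
    and C: "C \<in> sets (S \<Otimes>\<^sub>M borel)"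
  shows "emeasure M {\<omega>\<in>space M. (X \<omega>, Z \<omega>) \<in> C} = (\<integral>\<^sup>+x. emeasure (\<kappa> x) (Pair x -` C) \<partial>distr M S X)"
proof -
  interpret prob_space M by (rule P)
  have kap[measurable]: "\<kappa> \<in> S \<rightarrow>\<^sub>M prob_algebra borel" using cl by (rule cond_law_kernel)
  define K where "K x = distr (\<kappa> x) (S \<Otimes>\<^sub>M borel) (Pair x)" for x
  have Km: "K \<in> S \<rightarrow>\<^sub>M prob_algebra (S \<Otimes>\<^sub>M borel)"
    unfolding K_def by (rule measurable_distr_prob_space2[OF kap]) measurable
  then have Ks: "K \<in> S \<rightarrow>\<^sub>M subprob_algebra (S \<Otimes>\<^sub>M borel)" by (rule measurable_prob_algebraD)
  have spne: "space (distr M S X) \<noteq> {}"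
    using not_empty X by (auto simp: measurable_def)
  have Kx: "emeasure (K x) D = emeasure (\<kappa> x) (Pair x -` D)" if "x \<in> space S" "D \<in> sets (S \<Otimes>\<^sub>M borel)" for x D
  proof -
    have "emeasure (K x) D = emeasure (\<kappa> x) (Pair x -` D \<inter> space (\<kappa> x))"
      unfolding K_def using that kap kernel_props[OF kap that(1)]
      by (intro emeasure_distr) (auto simp: measurable_Pair2' cong: measurable_cong_sets)
    then show ?thesis using kernel_props[OF kap that(1)] by simp
  qed
  define \<nu>1 where "\<nu>1 = distr M (S \<Otimes>\<^sub>M borel) (\<lambda>\<omega>. (X \<omega>, Z \<omega>))"
  define \<nu>2 where "\<nu>2 = distr M S X \<bind> K"
  have "\<nu>1 = \<nu>2"
  proof (rule measure_eqI_generator_eq[OF Int_stable_pair_measure_generator[where A=S and B="borel::real measure"] pair_measure_closed[where A=S and B="borel::real measure"]])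
    fix D assume "D \<in> {a \<times> b |a b. a \<in> sets S \<and> b \<in> sets (borel::real measure)}"
    then obtain a b where D: "D = a \<times> b" "a \<in> sets S" "b \<in> sets borel" by auto
    have ab: "a \<times> b \<in> sets (S \<Otimes>\<^sub>M borel)" using D by auto
    have "emeasure \<nu>1 D = emeasure M {\<omega>\<in>space M. X \<omega> \<in> a \<and> Z \<omega> \<in> b}"
      unfolding \<nu>1_def D(1) using ab by (subst emeasure_distr) (auto intro!: arg_cong[where f="emeasure M"])
    also have "\<dots> = (\<integral>\<^sup>+x. indicator a x * emeasure (\<kappa> x) b \<partial>distr M S X)"
      using cl D by (simp add: is_cond_law_def)
    also have "\<dots> = (\<integral>\<^sup>+x. emeasure (K x) (a \<times> b) \<partial>distr M S X)"
    proof (intro nn_integral_cong)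
      fix x assume "x \<in> space (distr M S X)"
      then have x: "x \<in> space S" by simp
      show "indicator a x * emeasure (\<kappa> x) b = emeasure (K x) (a \<times> b)"
        by (subst Kx[OF x ab]) (auto simp: indicator_def vimage_def)
    qed
    also have "\<dots> = emeasure \<nu>2 D"
      unfolding \<nu>2_def D(1) using ab by (subst emeasure_bind[OF spne]) (auto intro: Ks)
    finally show "emeasure \<nu>1 D = emeasure \<nu>2 D" .
  next
    show "sets \<nu>1 = sigma_sets (space S \<times> space (borel::real measure)) {a \<times> b |a b. a \<in> sets S \<and> b \<in> sets (borel::real measure)}"
      unfolding \<nu>1_def by (simp add: sets_pair_measure)
  next
    have "sets \<nu>2 = sets (S \<Otimes>\<^sub>M borel)"
      unfolding \<nu>2_def using spne Km
      by (intro sets_bind) (auto dest: measurable_space simp: space_prob_algebra)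
    then show "sets \<nu>2 = sigma_sets (space S \<times> space (borel::real measure)) {a \<times> b |a b. a \<in> sets S \<and> b \<in> sets (borel::real measure)}"
      by (simp add: sets_pair_measure)
  next
    show "range (\<lambda>_. space S \<times> space (borel::real measure)) \<subseteq> {a \<times> b |a b. a \<in> sets S \<and> b \<in> sets (borel::real measure)}"
      using sets.top[of S] sets.top[of "borel::real measure"] by blast
    show "(\<Union>i::nat. space S \<times> space (borel::real measure)) = space S \<times> space (borel::real measure)" by simp
    fix i :: nat
    show "emeasure \<nu>1 (space S \<times> space (borel::real measure)) \<noteq> \<infinity>"
      unfolding \<nu>1_def by (subst emeasure_distr) (auto simp: space_pair_measure[symmetric])
  qed
  have "emeasure M {\<omega>\<in>space M. (X \<omega>, Z \<omega>) \<in> C} = emeasure \<nu>1 C"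
    unfolding \<nu>1_def using C by (subst emeasure_distr) (auto intro!: arg_cong[where f="emeasure M"])
  also have "\<dots> = emeasure \<nu>2 C" using \<open>\<nu>1 = \<nu>2\<close> by simp
  also have "\<dots> = (\<integral>\<^sup>+x. emeasure (K x) C \<partial>distr M S X)"
    unfolding \<nu>2_def using C by (subst emeasure_bind[OF spne]) (auto intro: Ks)
  also have "\<dots> = (\<integral>\<^sup>+x. emeasure (\<kappa> x) (Pair x -` C) \<partial>distr M S X)"
    using C by (intro nn_integral_cong) (simp add: Kx)
  finally show ?thesis .
qed

lemma AE_eq_from_setint:
  assumes N: "prob_space N" and f: "f \<in> borel_measurable N" and g: "g \<in> borel_measurable N"
    and eq: "\<And>A. A \<in> sets N \<Longrightarrow> (\<integral>\<^sup>+x. indicator A x * f x \<partial>N) = (\<integral>\<^sup>+x. indicator A x * g x \<partial>N)"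
  shows "AE x in N. f x = g x"
proof -
  interpret prob_space N by (rule N)
  have "density N f = density N g"
  proof (rule measure_eqI)
    fix A assume "A \<in> sets (density N f)"
    then have A: "A \<in> sets N" by simp
    show "emeasure (density N f) A = emeasure (density N g) A"
      using eq[OF A] A f g by (simp add: emeasure_density mult.commute)
  qed simp
  then show ?thesis using density_unique_iff[OF f g] by simp
qed


lemma right_cont_eq_on_rats:
  fixes F G :: "real \<Rightarrow> real"
  assumes F: "continuous (at_right r) F" and G: "continuous (at_right r) G"
    and eq: "\<And>q. q \<in> \<rat> \<Longrightarrow> F q = G q"
  shows "F r = G r"
proof -
  have "\<exists>q\<in>\<rat>. r < q \<and> q < r + inverse (real (Suc k))" for k
    by (rule Rats_dense_in_real) simp
  then obtain q where q: "\<And>k. q k \<in> \<rat>" "\<And>k. r < q k" "\<And>k. q k < r + inverse (real (Suc k))"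
    by metis
  have lim1: "(\<lambda>k. r + inverse (real (Suc k))) \<longlonglongrightarrow> r"
    using tendsto_add[OF tendsto_const LIMSEQ_inverse_real_of_nat, of r] by simp
  have "q \<longlonglongrightarrow> r"
    by (rule tendsto_sandwich[OF _ _ tendsto_const lim1]) (intro always_eventually allI less_imp_le q)+
  then have ql: "filterlim q (at_right r) sequentially"
    by (rule tendsto_imp_filterlim_at_right) (intro always_eventually allI q)
  have "(\<lambda>k. F (q k)) \<longlonglongrightarrow> F r"
    using F ql unfolding continuous_within by (rule filterlim_compose)
  moreover have "(\<lambda>k. G (q k)) \<longlonglongrightarrow> G r"
    using G ql unfolding continuous_within by (rule filterlim_compose)
  moreover have "(\<lambda>k. F (q k)) = (\<lambda>k. G (q k))" using eq q by auto
  ultimately show ?thesis using LIMSEQ_unique by metis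
qed

lemma real_distr_eq_rats:
  fixes P1 P2 :: "real measure"
  assumes P1: "prob_space P1" "sets P1 = sets borel" and P2: "prob_space P2" "sets P2 = sets borel"
    and eq: "\<forall>q\<in>\<rat>. emeasure P1 {..q} = emeasure P2 {..q}"
  shows "P1 = P2"
proof -
  interpret R1: real_distribution P1 using P1 by (auto simp: real_distribution_def real_distribution_axioms_def)
  interpret R2: real_distribution P2 using P2 by (auto simp: real_distribution_def real_distribution_axioms_def)
  have "cdf P1 r = cdf P2 r" for r
  proof (rule right_cont_eq_on_rats[OF R1.cdf_is_right_cont R2.cdf_is_right_cont])
    fix q :: real assume "q \<in> \<rat>"
    then show "cdf P1 q = cdf P2 q" using eq by (simp add: cdf_def measure_def)
  qed
  then show ?thesis
    by (intro cdf_unique) (auto simp: real_distribution_def real_distribution_axioms_def P1 P2)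
qed

lemma AE_measure_eq_rats:
  fixes K1 K2 :: "'a \<Rightarrow> real measure"
  assumes K1: "\<And>x. x \<in> space N \<Longrightarrow> prob_space (K1 x) \<and> sets (K1 x) = sets borel"
    and K2: "\<And>x. x \<in> space N \<Longrightarrow> prob_space (K2 x) \<and> sets (K2 x) = sets borel"
    and eq: "\<And>q. q \<in> \<rat> \<Longrightarrow> AE x in N. emeasure (K1 x) {..q} = emeasure (K2 x) {..q}"
  shows "AE x in N. K1 x = K2 x"
proof -
  have "AE x in N. \<forall>q\<in>\<rat>. emeasure (K1 x) {..q} = emeasure (K2 x) {..q}"
    using eq by (subst AE_ball_countable[OF countable_rat]) auto
  with AE_space show ?thesis
  proof eventually_elim
    case (elim x)
    then show ?case using K1[of x] K2[of x] by (intro real_distr_eq_rats) auto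
  qed
qed

definition mix :: "'a measure \<Rightarrow> 'a measure \<Rightarrow> 'a measure" where
  "mix A B = measure_pmf (bernoulli_pmf (1/2)) \<bind> (\<lambda>b. if b then A else B)"

lemma mix_kernel:
  assumes "prob_space A" "prob_space B" "sets A = sets N" "sets B = sets N"
  shows "(\<lambda>b. if b then A else B) \<in> measure_pmf p \<rightarrow>\<^sub>M subprob_algebra N"
proof -
  have "(\<lambda>b. if b then A else B) \<in> count_space UNIV \<rightarrow>\<^sub>M subprob_algebra N"
    using assms by (auto simp: space_subprob_algebra prob_space_imp_subprob_space)
  then show ?thesis by (simp cong: measurable_cong_sets)
qed

lemma mix_sets: assumes "prob_space A" "prob_space B" "sets A = sets N" "sets B = sets N"
  shows "sets (mix A B) = sets N"
  unfolding mix_def using assms by (subst sets_bind[where N=N]) auto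

lemma mix_prob: assumes "prob_space A" "prob_space B" "sets A = sets N" "sets B = sets N"
  shows "prob_space (mix A B)"
  unfolding mix_def using assms
  by (intro prob_space.prob_space_bind[OF measure_pmf.prob_space_axioms _ mix_kernel[OF assms]]) auto

lemma mix_nn_integral:
  assumes "prob_space A" "prob_space B" "sets A = sets N" "sets B = sets N" and f: "f \<in> borel_measurable N"
  shows "(\<integral>\<^sup>+x. f x \<partial>mix A B) = ((\<integral>\<^sup>+x. f x \<partial>A) + (\<integral>\<^sup>+x. f x \<partial>B)) / 2"
proof -
  have fA: "(\<integral>\<^sup>+x. f x \<partial>A) = (\<integral>\<^sup>+x. f x \<partial>(if True then A else B))" by simp
  have "(\<integral>\<^sup>+x. f x \<partial>mix A B) = (\<integral>\<^sup>+b. (\<integral>\<^sup>+x. f x \<partial>(if b then A else B)) \<partial>measure_pmf (bernoulli_pmf (1/2)))"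
    unfolding mix_def by (rule nn_integral_bind[OF f mix_kernel[OF assms(1-4)]])
  also have "\<dots> = (\<integral>\<^sup>+x. f x \<partial>A) * ennreal (1/2) + (\<integral>\<^sup>+x. f x \<partial>B) * ennreal (1 - 1/2)"
    by (subst nn_integral_bernoulli_pmf) auto
  also have "\<dots> = ((\<integral>\<^sup>+x. f x \<partial>A) + (\<integral>\<^sup>+x. f x \<partial>B)) / 2"
    by (simp add: divide_ennreal_def ennreal_divide_numeral distrib_right[symmetric] ennreal_inverse_positive
        flip: divide_ennreal)
  finally show ?thesis .
qed

lemma mix_emeasure:
  assumes "prob_space A" "prob_space B" "sets A = sets N" "sets B = sets N" and X: "X \<in> sets N"
  shows "emeasure (mix A B) X = (emeasure A X + emeasure B X) / 2"
proof -
  have "emeasure (mix A B) X = (\<integral>\<^sup>+x. indicator X x \<partial>mix A B)"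
    using X mix_sets[OF assms(1-4)] by simp
  also have "\<dots> = ((\<integral>\<^sup>+x. indicator X x \<partial>A) + (\<integral>\<^sup>+x. indicator X x \<partial>B)) / 2"
    using X by (intro mix_nn_integral[OF assms(1-4)]) auto
  also have "\<dots> = (emeasure A X + emeasure B X) / 2" using X assms by simp
  finally show ?thesis .
qed

lemma mix_distr:
  assumes "prob_space A" "prob_space B" "sets A = sets N" "sets B = sets N" and g: "g \<in> N \<rightarrow>\<^sub>M R"
  shows "distr (mix A B) R g = mix (distr A R g) (distr B R g)"
proof -
  have "distr (mix A B) R g = measure_pmf (bernoulli_pmf (1/2)) \<bind> (\<lambda>b. distr (if b then A else B) R g)"
    unfolding mix_def by (rule distr_bind[OF mix_kernel[OF assms(1-4)] _ g]) simp
  also have "(\<lambda>b. distr (if b then A else B) R g) = (\<lambda>b. if b then distr A R g else distr B R g)"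
    by auto
  finally show ?thesis unfolding mix_def .
qed

lemma mix_same: assumes "prob_space A" shows "mix A A = A"
  unfolding mix_def by (simp add: bind_const'[OF measure_pmf.prob_space_axioms prob_space_imp_subprob_space[OF assms]])


definition shift :: "real \<Rightarrow> real measure \<Rightarrow> real measure" where
  "shift d K = distr K borel (\<lambda>w. w + d)"

lemma shift_props:
  assumes "prob_space K" "sets K = sets borel"
  shows "prob_space (shift d K)" "sets (shift d K) = sets borel"
proof -
  have "(\<lambda>w. w + d) \<in> K \<rightarrow>\<^sub>M borel" using assms(2) by (simp cong: measurable_cong_sets)
  then show "prob_space (shift d K)" "sets (shift d K) = sets borel"
    unfolding shift_def using assms by (auto intro!: prob_space.prob_space_distr)
qed

lemma W1_le_coupling:
  assumes "\<pi> \<in> couplings P Q"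
  shows "wasserstein1 P Q \<le> (\<integral>\<^sup>+z. ennreal \<bar>fst z - snd z\<bar> \<partial>\<pi>)"
  unfolding wasserstein1_def using assms by (rule INF_lower)

lemma graph_props:
  assumes K: "prob_space K" "sets K = sets borel" and g: "g \<in> borel \<rightarrow>\<^sub>M borel" and h: "h \<in> borel \<rightarrow>\<^sub>M borel"
  shows "prob_space (distr K (borel \<Otimes>\<^sub>M borel) (\<lambda>w. (g w, h w)))"
    "sets (distr K (borel \<Otimes>\<^sub>M borel) (\<lambda>w. (g w, h w))) = sets (borel \<Otimes>\<^sub>M borel)"
    "distr (distr K (borel \<Otimes>\<^sub>M borel) (\<lambda>w. (g w, h w))) borel fst = distr K borel g"
    "distr (distr K (borel \<Otimes>\<^sub>M borel) (\<lambda>w. (g w, h w))) borel snd = distr K borel h"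
    "(\<integral>\<^sup>+z. ennreal \<bar>fst z - snd z\<bar> \<partial>distr K (borel \<Otimes>\<^sub>M borel) (\<lambda>w. (g w, h w))) = (\<integral>\<^sup>+w. ennreal \<bar>g w - h w\<bar> \<partial>K)"
proof -
  have gh: "(\<lambda>w. (g w, h w)) \<in> K \<rightarrow>\<^sub>M borel \<Otimes>\<^sub>M borel"
    using g h K(2) by (auto cong: measurable_cong_sets)
  show "prob_space (distr K (borel \<Otimes>\<^sub>M borel) (\<lambda>w. (g w, h w)))"
    using gh K by (intro prob_space.prob_space_distr) auto
  show "sets (distr K (borel \<Otimes>\<^sub>M borel) (\<lambda>w. (g w, h w))) = sets (borel \<Otimes>\<^sub>M borel)" by simp
  show "distr (distr K (borel \<Otimes>\<^sub>M borel) (\<lambda>w. (g w, h w))) borel fst = distr K borel g"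
    using gh by (subst distr_distr) (auto simp: comp_def)
  show "distr (distr K (borel \<Otimes>\<^sub>M borel) (\<lambda>w. (g w, h w))) borel snd = distr K borel h"
    using gh by (subst distr_distr) (auto simp: comp_def)
  show "(\<integral>\<^sup>+z. ennreal \<bar>fst z - snd z\<bar> \<partial>distr K (borel \<Otimes>\<^sub>M borel) (\<lambda>w. (g w, h w))) = (\<integral>\<^sup>+w. ennreal \<bar>g w - h w\<bar> \<partial>K)"
    using gh by (subst nn_integral_distr) auto
qed

lemma W1_mix_bound:
  assumes K: "prob_space K" "sets K = sets borel"
    and g1: "g1 \<in> borel \<rightarrow>\<^sub>M borel" and h1: "h1 \<in> borel \<rightarrow>\<^sub>M borel"
    and g2: "g2 \<in> borel \<rightarrow>\<^sub>M borel" and h2: "h2 \<in> borel \<rightarrow>\<^sub>M borel"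
  shows "wasserstein1 (mix (distr K borel g1) (distr K borel g2)) (mix (distr K borel h1) (distr K borel h2))
     \<le> ((\<integral>\<^sup>+w. ennreal \<bar>g1 w - h1 w\<bar> \<partial>K) + (\<integral>\<^sup>+w. ennreal \<bar>g2 w - h2 w\<bar> \<partial>K)) / 2"
proof -
  note G1 = graph_props[OF K g1 h1] and G2 = graph_props[OF K g2 h2]
  define \<pi> where "\<pi> = mix (distr K (borel \<Otimes>\<^sub>M borel) (\<lambda>w. (g1 w, h1 w))) (distr K (borel \<Otimes>\<^sub>M borel) (\<lambda>w. (g2 w, h2 w)))"
  have "\<pi> \<in> couplings (mix (distr K borel g1) (distr K borel g2)) (mix (distr K borel h1) (distr K borel h2))"
    unfolding couplings_def \<pi>_def
    using mix_sets[OF G1(1) G2(1) G1(2) G2(2)] mix_prob[OF G1(1) G2(1) G1(2) G2(2)]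
      mix_distr[OF G1(1) G2(1) G1(2) G2(2), of fst borel] mix_distr[OF G1(1) G2(1) G1(2) G2(2), of snd borel]
    by (simp add: G1(3,4) G2(3,4))
  then have "wasserstein1 (mix (distr K borel g1) (distr K borel g2)) (mix (distr K borel h1) (distr K borel h2))
      \<le> (\<integral>\<^sup>+z. ennreal \<bar>fst z - snd z\<bar> \<partial>\<pi>)" by (rule W1_le_coupling)
  also have "\<dots> = ((\<integral>\<^sup>+w. ennreal \<bar>g1 w - h1 w\<bar> \<partial>K) + (\<integral>\<^sup>+w. ennreal \<bar>g2 w - h2 w\<bar> \<partial>K)) / 2"
    unfolding \<pi>_def by (subst mix_nn_integral[OF G1(1) G2(1) G1(2) G2(2)]) (auto simp: G1(5) G2(5))
  finally show ?thesis .
qed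

lemma distr_id_borel: "sets K = sets borel \<Longrightarrow> distr K borel (\<lambda>w. w) = K"
  by (rule distr_id2) simp

lemma W1_bound1:
  assumes K: "prob_space K" "sets K = sets borel"
  shows "wasserstein1 K (mix K (shift d K)) \<le> ennreal (\<bar>d\<bar> / 2)"
proof -
  interpret prob_space K by (rule K(1))
  have "wasserstein1 (mix (distr K borel (\<lambda>w. w)) (distr K borel (\<lambda>w. w))) (mix (distr K borel (\<lambda>w. w)) (distr K borel (\<lambda>w. w + d)))
     \<le> ((\<integral>\<^sup>+w. ennreal \<bar>w - w\<bar> \<partial>K) + (\<integral>\<^sup>+w. ennreal \<bar>w - (w + d)\<bar> \<partial>K)) / 2"
    by (rule W1_mix_bound[OF K]) auto
  also have "\<dots> = ennreal (\<bar>d\<bar> / 2)"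
    by (simp add: emeasure_space_1 ennreal_divide_numeral)
  finally show ?thesis using K by (simp add: distr_id_borel mix_same shift_def)
qed

lemma W1_bound2:
  assumes K: "prob_space K" "sets K = sets borel"
  shows "wasserstein1 (shift d K) (mix K (shift d K)) \<le> ennreal (\<bar>d\<bar> / 2)"
proof -
  interpret prob_space K by (rule K(1))
  have "wasserstein1 (mix (distr K borel (\<lambda>w. w + d)) (distr K borel (\<lambda>w. w + d))) (mix (distr K borel (\<lambda>w. w)) (distr K borel (\<lambda>w. w + d)))
     \<le> ((\<integral>\<^sup>+w. ennreal \<bar>w + d - w\<bar> \<partial>K) + (\<integral>\<^sup>+w. ennreal \<bar>w + d - (w + d)\<bar> \<partial>K)) / 2"
    by (rule W1_mix_bound[OF K]) auto
  also have "\<dots> = ennreal (\<bar>d\<bar> / 2)"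
    by (simp add: emeasure_space_1 ennreal_divide_numeral)
  finally show ?thesis using K shift_props[OF K, of d] by (simp add: distr_id_borel mix_same shift_def)
qed


lemma ennreal_half_eq: "(x::ennreal) = (x + x) / 2"
proof -
  have "x + x = x * 2" by (simp add: mult_2_right)
  then show ?thesis by (simp add: ennreal_mult_divide_eq)
qed

locale part1 =
  fixes n :: "nat \<Rightarrow> nat" and L :: nat and \<theta> :: real and \<sigma> :: "nat \<Rightarrow> real" and l :: nat and ix :: "nat list"
  assumes ix: "ix \<in> idx n l" and l: "l \<in> {1..L}" and n_pos: "\<And>k. k \<in> {1..L} \<Longrightarrow> n k \<ge> 1"
    and \<sigma>_pos: "\<sigma> l > 0"
begin

abbreviation "M \<equiv> supersample_space n L"
abbreviation "c0 \<equiv> (l, ix)"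
abbreviation "X \<equiv> XT \<theta> \<sigma> l ix"
abbreviation "Y \<equiv> XU \<theta> \<sigma> l ix"
abbreviation "W \<equiv> hypW n L \<theta> \<sigma>"
definition "\<delta> t = (snd t - fst t) / real (NN n l)"

lemma c0_node: "c0 \<in> nodes n L" using ix l by (simp add: nodes_def)

lemma len_ix: "length ix = l" using ix by (simp add: idx_def)

lemma probM: "prob_space M" by (rule prob_SS)

lemma X_meas[measurable]: "X \<in> M \<rightarrow>\<^sub>M SXT"
  unfolding XT_def[abs_def] SXT_def by measurable

lemma Y_meas[measurable]: "Y \<in> M \<rightarrow>\<^sub>M SXU"
  unfolding XU_def[abs_def] SXU_def by measurable

lemma X_fl: "X (fl c0 \<omega>) = X \<omega>"
  using len_ix by (simp add: XT_def mutil_fl_same)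

lemma U_fl: "snd (fl c0 \<omega>) c0 = 3 - snd \<omega> c0" by (simp add: fl_def)

lemma a_diff: "mutil \<theta> \<sigma> \<omega> l ix 2 - mutil \<theta> \<sigma> \<omega> l ix 1 = \<sigma> l * (fst \<omega> (c0, 2) - fst \<omega> (c0, 1))"
  using l by (simp add: mutil_formula right_diff_distrib)

lemma W_fl1: "snd \<omega> c0 = 1 \<Longrightarrow> W (fl c0 \<omega>) = W \<omega> + \<delta> (X \<omega>)"
  using hypW_fl[OF ix l n_pos, of \<theta> \<sigma> \<omega>] a_diff[of \<omega>] by (simp add: \<delta>_def XT_def)

lemma fl_emeasure:
  assumes "S \<in> sets M"
  shows "emeasure M S = emeasure M (fl c0 -` S \<inter> space M)"
proof -
  have "emeasure M S = emeasure (distr M M (fl c0)) S" using fl_distr[OF c0_node] by simp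
  also have "\<dots> = emeasure M (fl c0 -` S \<inter> space M)"
    using assms c0_node by (intro emeasure_distr) auto
  finally show ?thesis .
qed

lemma half:
  assumes f[measurable]: "f \<in> borel_measurable SXT" and u: "u \<in> {1,2}"
  shows "(\<integral>\<^sup>+\<omega>. indicator {\<omega>. snd \<omega> c0 = u} \<omega> * f (X \<omega>) \<partial>M) = (\<integral>\<^sup>+\<omega>. f (X \<omega>) \<partial>M) / 2"
proof -
  have ind_meas: "(\<lambda>\<omega>. indicator {\<omega>. snd \<omega> c0 = v} \<omega> * f (X \<omega>)) \<in> borel_measurable M" for v
  proof -
    have "(\<lambda>\<omega>. indicator {\<omega>. snd \<omega> c0 = v} \<omega> :: ennreal) = (\<lambda>\<omega>. indicator {v} (snd \<omega> c0))"
      by (auto simp: indicator_def)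
    moreover have "(\<lambda>\<omega>. indicator {v} (snd \<omega> c0) :: ennreal) \<in> borel_measurable M"
      by (rule measurable_compose[OF coordU]) simp
    ultimately show ?thesis by simp
  qed
  let ?I = "\<lambda>v. (\<integral>\<^sup>+\<omega>. indicator {\<omega>. snd \<omega> c0 = v} \<omega> * f (X \<omega>) \<partial>M)"
  have "?I 2 = (\<integral>\<^sup>+\<omega>. indicator {\<omega>. snd \<omega> c0 = 2} (fl c0 \<omega>) * f (X (fl c0 \<omega>)) \<partial>M)"
    by (rule fl_nn[OF c0_node ind_meas, symmetric])
  also have "\<dots> = ?I 1"
    by (intro nn_integral_cong) (auto simp: X_fl U_fl indicator_def)
  finally have I21: "?I 2 = ?I 1" .
  have "?I 1 + ?I 2 = (\<integral>\<^sup>+\<omega>. indicator {\<omega>. snd \<omega> c0 = 1} \<omega> * f (X \<omega>) + indicator {\<omega>. snd \<omega> c0 = 2} \<omega> * f (X \<omega>) \<partial>M)"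
    by (rule nn_integral_add[symmetric]) (auto intro: ind_meas)
  also have "\<dots> = (\<integral>\<^sup>+\<omega>. f (X \<omega>) \<partial>M)"
    using AE_U12[OF c0_node] by (intro nn_integral_cong_AE) (auto simp: indicator_def)
  finally have tot: "?I 1 + ?I 2 = (\<integral>\<^sup>+\<omega>. f (X \<omega>) \<partial>M)" .
  have "?I 1 = (\<integral>\<^sup>+\<omega>. f (X \<omega>) \<partial>M) / 2" using tot I21 ennreal_half_eq[of "?I 1"] by simp
  then show ?thesis using u I21 by auto
qed

end


lemma ennreal_div2_cancel: "(a::ennreal) / 2 = b / 2 \<Longrightarrow> a = b"
  by (metis ennreal_half_eq ennreal_times_divide mult_2)

context part1
begin

abbreviation "PX \<equiv> distr M SXT X"
abbreviation "P \<equiv> distr M SXU Y"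

lemma delta_meas[measurable]: "\<delta> \<in> borel_measurable SXT"
  unfolding \<delta>_def[abs_def] SXT_def by measurable

lemma sets_SXU_rect: "A \<in> sets SXT \<Longrightarrow> A \<times> {u} \<in> sets SXU"
  unfolding SXU_def SXT_def by (intro pair_measureI) auto

lemma space_SXT: "space SXT = UNIV" by (simp add: SXT_def space_pair_measure)
lemma space_SXU: "space SXU = UNIV" by (simp add: SXU_def SXT_def space_pair_measure)

lemma pairu_meas[measurable]: "(\<lambda>t. (t, u)) \<in> SXT \<rightarrow>\<^sub>M SXU"
  unfolding SXU_def SXT_def by measurable

lemma setint_u:
  assumes A: "A \<in> sets SXT" and u: "u \<in> {1,2}" and h[measurable]: "h \<in> borel_measurable SXU"
  shows "(\<integral>\<^sup>+x. indicator (A \<times> {u}) x * h x \<partial>P) = (\<integral>\<^sup>+t. indicator A t * h (t,u) \<partial>PX) / 2"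
proof -
  have Au: "A \<times> {u} \<in> sets SXU" using A by (rule sets_SXU_rect)
  have "(\<integral>\<^sup>+x. indicator (A \<times> {u}) x * h x \<partial>P) = (\<integral>\<^sup>+\<omega>. indicator (A \<times> {u}) (Y \<omega>) * h (Y \<omega>) \<partial>M)"
    using Au by (subst nn_integral_distr) auto
  also have "\<dots> = (\<integral>\<^sup>+\<omega>. indicator {\<omega>. snd \<omega> c0 = u} \<omega> * (indicator A (X \<omega>) * h (X \<omega>, u)) \<partial>M)"
    by (intro nn_integral_cong) (auto simp: XU_def XT_def indicator_def)
  also have "\<dots> = (\<integral>\<^sup>+\<omega>. indicator A (X \<omega>) * h (X \<omega>, u) \<partial>M) / 2"
    using A u by (intro half) auto
  also have "(\<integral>\<^sup>+\<omega>. indicator A (X \<omega>) * h (X \<omega>, u) \<partial>M) = (\<integral>\<^sup>+t. indicator A t * h (t,u) \<partial>PX)"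
    using A by (subst nn_integral_distr) auto
  finally show ?thesis .
qed

end

locale part1k = part1 +
  fixes \<kappa>1 :: "(real \<times> real) \<times> nat \<Rightarrow> real measure" and \<kappa>2 :: "real \<times> real \<Rightarrow> real measure"
  assumes cl1: "is_cond_law (supersample_space n L) SXU (XU \<theta> \<sigma> l ix) (hypW n L \<theta> \<sigma>) \<kappa>1"
    and cl2: "is_cond_law (supersample_space n L) SXT (XT \<theta> \<sigma> l ix) (hypW n L \<theta> \<sigma>) \<kappa>2"
begin

lemma k1[measurable]: "\<kappa>1 \<in> SXU \<rightarrow>\<^sub>M prob_algebra borel" using cl1 by (rule cond_law_kernel)
lemma k2[measurable]: "\<kappa>2 \<in> SXT \<rightarrow>\<^sub>M prob_algebra borel" using cl2 by (rule cond_law_kernel)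

lemma k1_props: "prob_space (\<kappa>1 x)" "sets (\<kappa>1 x) = sets borel" "space (\<kappa>1 x) = UNIV"
  using kernel_props[OF k1, of x] by (auto simp: space_SXU)
lemma k2_props: "prob_space (\<kappa>2 x)" "sets (\<kappa>2 x) = sets borel" "space (\<kappa>2 x) = UNIV"
  using kernel_props[OF k2, of x] by (auto simp: space_SXT)

lemma k1_emeas[measurable]: "B \<in> sets borel \<Longrightarrow> (\<lambda>x. emeasure (\<kappa>1 x) B) \<in> borel_measurable SXU"
  using measurable_emeasure_kernel[OF measurable_prob_algebraD[OF k1]] by simp
lemma k2_emeas[measurable]: "B \<in> sets borel \<Longrightarrow> (\<lambda>x. emeasure (\<kappa>2 x) B) \<in> borel_measurable SXT"
  using measurable_emeasure_kernel[OF measurable_prob_algebraD[OF k2]] by simp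

lemma fst_SXU[measurable]: "fst \<in> SXU \<rightarrow>\<^sub>M SXT" by (simp add: SXU_def SXT_def)
lemma snd_SXU[measurable]: "snd \<in> SXU \<rightarrow>\<^sub>M count_space UNIV" by (simp add: SXU_def)
lemma delta_fst_meas[measurable]: "(\<lambda>x. \<delta> (fst x)) \<in> borel_measurable SXU"
  by (rule measurable_compose[OF fst_SXU delta_meas])

lemma shiftk_meas: "(\<lambda>x. shift (\<delta> (fst x)) (\<kappa>1 x)) \<in> SXU \<rightarrow>\<^sub>M prob_algebra borel"
  unfolding shift_def
proof (rule measurable_distr_prob_space2[OF k1])
  have "(\<lambda>p. \<delta> (fst (fst p))) \<in> borel_measurable (SXU \<Otimes>\<^sub>M borel)"
    by (rule measurable_compose[OF measurable_fst delta_fst_meas])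
  then show "(\<lambda>(x, y). y + \<delta> (fst x)) \<in> SXU \<Otimes>\<^sub>M borel \<rightarrow>\<^sub>M borel"
    by (simp add: case_prod_beta')
qed

lemma shiftk_emeas[measurable]: "B \<in> sets borel \<Longrightarrow> (\<lambda>x. emeasure (shift (\<delta> (fst x)) (\<kappa>1 x)) B) \<in> borel_measurable SXU"
  using measurable_emeasure_kernel[OF measurable_prob_algebraD[OF shiftk_meas]] by simp

lemma emeasure_shift: "B \<in> sets borel \<Longrightarrow> emeasure (shift d (\<kappa>1 x)) B = emeasure (\<kappa>1 x) {w. w + d \<in> B}"
  unfolding shift_def using k1_props[of x]
  by (subst emeasure_distr) (auto simp: measurable_cong_sets[OF k1_props(2) refl] vimage_def)

lemma E1_setint:
  assumes A: "A \<in> sets SXT" and B: "B \<in> sets borel"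
  shows "(\<integral>\<^sup>+t. indicator A t * emeasure (\<kappa>1 (t,2)) B \<partial>PX) = (\<integral>\<^sup>+t. indicator A t * emeasure (shift (\<delta> t) (\<kappa>1 (t,1))) B \<partial>PX)"
proof -
  have A2: "A \<times> {2} \<in> sets SXU" "A \<times> {1} \<in> sets SXU" using A by (auto intro: sets_SXU_rect)
  define C where "C = {p \<in> space (SXU \<Otimes>\<^sub>M borel). fst (fst p) \<in> A \<and> snd (fst p) = 1 \<and> snd p + \<delta> (fst (fst p)) \<in> B}"
  have C: "C \<in> sets (SXU \<Otimes>\<^sub>M borel)"
  proof -
    have m1: "(\<lambda>p. fst (fst p)) \<in> SXU \<Otimes>\<^sub>M borel \<rightarrow>\<^sub>M SXT"
      by (rule measurable_compose[OF measurable_fst fst_SXU])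
    have m2: "(\<lambda>p. snd (fst p)) \<in> SXU \<Otimes>\<^sub>M borel \<rightarrow>\<^sub>M count_space UNIV"
      by (rule measurable_compose[OF measurable_fst snd_SXU])
    have m3: "(\<lambda>p. snd p + \<delta> (fst (fst p))) \<in> borel_measurable (SXU \<Otimes>\<^sub>M borel)"
      using measurable_compose[OF measurable_fst delta_fst_meas] by measurable
    have "C = ((\<lambda>p. fst (fst p)) -` A \<inter> space (SXU \<Otimes>\<^sub>M borel)) \<inter> ((\<lambda>p. snd (fst p)) -` {1} \<inter> space (SXU \<Otimes>\<^sub>M borel))
       \<inter> ((\<lambda>p. snd p + \<delta> (fst (fst p))) -` B \<inter> space (SXU \<Otimes>\<^sub>M borel))"
      unfolding C_def by auto
    also have "\<dots> \<in> sets (SXU \<Otimes>\<^sub>M borel)"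
      using A B by (intro sets.Int measurable_sets[OF m1] measurable_sets[OF m2] measurable_sets[OF m3]) auto
    finally show ?thesis .
  qed
  have S: "{\<omega>\<in>space M. Y \<omega> \<in> A \<times> {2} \<and> W \<omega> \<in> B} \<in> sets M"
    using A2 B by measurable
  have "(\<integral>\<^sup>+t. indicator A t * emeasure (\<kappa>1 (t,2)) B \<partial>PX) / 2 = (\<integral>\<^sup>+x. indicator (A \<times> {2}) x * emeasure (\<kappa>1 x) B \<partial>P)"
    using A B by (intro setint_u[symmetric]) auto
  also have "\<dots> = emeasure M {\<omega>\<in>space M. Y \<omega> \<in> A \<times> {2} \<and> W \<omega> \<in> B}"
    using cl1 A2 B by (simp add: is_cond_law_def)
  also have "\<dots> = emeasure M (fl c0 -` {\<omega>\<in>space M. Y \<omega> \<in> A \<times> {2} \<and> W \<omega> \<in> B} \<inter> space M)"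
    using S by (rule fl_emeasure)
  also have "fl c0 -` {\<omega>\<in>space M. Y \<omega> \<in> A \<times> {2} \<and> W \<omega> \<in> B} \<inter> space M = {\<omega>\<in>space M. (Y \<omega>, W \<omega>) \<in> C}"
  proof (intro set_eqI iffI)
    fix \<omega> assume "\<omega> \<in> fl c0 -` {\<omega>\<in>space M. Y \<omega> \<in> A \<times> {2} \<and> W \<omega> \<in> B} \<inter> space M"
    then have \<omega>: "\<omega> \<in> space M" and f: "fl c0 \<omega> \<in> {\<omega>\<in>space M. Y \<omega> \<in> A \<times> {2} \<and> W \<omega> \<in> B}" by auto
    have Yfl: "Y (fl c0 \<omega>) = (X \<omega>, 3 - snd \<omega> c0)"
      using X_fl[of \<omega>] by (simp add: XU_def XT_def U_fl)
    have iff: "3 - snd \<omega> c0 = 2 \<longleftrightarrow> snd \<omega> c0 = 1" by auto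
    have h: "X \<omega> \<in> A" "snd \<omega> c0 = 1" "W (fl c0 \<omega>) \<in> B" using f Yfl iff by auto
    then show "\<omega> \<in> {\<omega>\<in>space M. (Y \<omega>, W \<omega>) \<in> C}" using W_fl1[OF h(2)] \<omega>
      by (auto simp: C_def XU_def XT_def space_pair_measure space_SXU)
  next
    fix \<omega> assume "\<omega> \<in> {\<omega>\<in>space M. (Y \<omega>, W \<omega>) \<in> C}"
    then have \<omega>: "\<omega> \<in> space M" and c: "(Y \<omega>, W \<omega>) \<in> C" by auto
    have flsp: "fl c0 \<omega> \<in> space M" using measurable_space[OF fl_meas[OF c0_node] \<omega>] .
    have Yfl: "Y (fl c0 \<omega>) = (X \<omega>, 3 - snd \<omega> c0)"
      using X_fl[of \<omega>] by (simp add: XU_def XT_def U_fl)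
    have h: "X \<omega> \<in> A" "snd \<omega> c0 = 1" "W \<omega> + \<delta> (X \<omega>) \<in> B"
      using c by (auto simp: C_def XU_def XT_def)
    then show "\<omega> \<in> fl c0 -` {\<omega>\<in>space M. Y \<omega> \<in> A \<times> {2} \<and> W \<omega> \<in> B} \<inter> space M"
      using flsp Yfl W_fl1[OF h(2)] \<omega> by auto
  qed
  also have "emeasure M {\<omega>\<in>space M. (Y \<omega>, W \<omega>) \<in> C} = (\<integral>\<^sup>+x. emeasure (\<kappa>1 x) (Pair x -` C) \<partial>P)"
    by (rule cond_law_joint[OF probM cl1 Y_meas hypW_meas C])
  also have "\<dots> = (\<integral>\<^sup>+x. indicator (A \<times> {1}) x * emeasure (shift (\<delta> (fst x)) (\<kappa>1 x)) B \<partial>P)"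
  proof (intro nn_integral_cong)
    fix x :: "(real \<times> real) \<times> nat"
    show "emeasure (\<kappa>1 x) (Pair x -` C) = indicator (A \<times> {1}) x * emeasure (shift (\<delta> (fst x)) (\<kappa>1 x)) B"
    proof (cases "x \<in> A \<times> {1}")
      case True
      then have "Pair x -` C = {w. w + \<delta> (fst x) \<in> B}"
        by (auto simp: C_def space_pair_measure space_SXU)
      then show ?thesis using True B by (simp add: emeasure_shift)
    next
      case False
      then have "Pair x -` C = {}" by (auto simp: C_def mem_Times_iff)
      then show ?thesis using False by simp
    qed
  qed
  also have "\<dots> = (\<integral>\<^sup>+t. indicator A t * emeasure (shift (\<delta> (fst (t,1::nat))) (\<kappa>1 (t,1))) B \<partial>PX) / 2"
    using A B by (intro setint_u) auto
  finally have eq2: "(\<integral>\<^sup>+t. indicator A t * emeasure (\<kappa>1 (t,2)) B \<partial>PX) / 2 = (\<integral>\<^sup>+t. indicator A t * emeasure (shift (\<delta> (fst (t,1::nat))) (\<kappa>1 (t,1))) B \<partial>PX) / 2" .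
  from ennreal_div2_cancel[OF eq2] show ?thesis by simp
qed

end


context part1k
begin

lemma E2_setint:
  assumes A: "A \<in> sets SXT" and B: "B \<in> sets borel"
  shows "(\<integral>\<^sup>+t. indicator A t * emeasure (\<kappa>2 t) B \<partial>PX)
       = (\<integral>\<^sup>+t. indicator A t * ((emeasure (\<kappa>1 (t,1)) B + emeasure (\<kappa>1 (t,2)) B) / 2) \<partial>PX)"
proof -
  have A2: "A \<times> {1} \<in> sets SXU" "A \<times> {2} \<in> sets SXU" using A by (auto intro: sets_SXU_rect)
  define S where "S = {\<omega>\<in>space M. X \<omega> \<in> A \<and> W \<omega> \<in> B}"
  define S1 where "S1 = {\<omega>\<in>space M. Y \<omega> \<in> A \<times> {1} \<and> W \<omega> \<in> B}"
  define S2 where "S2 = {\<omega>\<in>space M. Y \<omega> \<in> A \<times> {2} \<and> W \<omega> \<in> B}"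
  have Sm: "S \<in> sets M" "S1 \<in> sets M" "S2 \<in> sets M"
    unfolding S_def S1_def S2_def using A A2 B by measurable
  have "(\<integral>\<^sup>+t. indicator A t * emeasure (\<kappa>2 t) B \<partial>PX) = emeasure M S"
    using cl2 A B by (simp add: is_cond_law_def S_def)
  also have "\<dots> = (\<integral>\<^sup>+\<omega>. indicator S1 \<omega> + indicator S2 \<omega> \<partial>M)"
    unfolding nn_integral_indicator[OF Sm(1), symmetric]
    using AE_U12[OF c0_node]
  proof (intro nn_integral_cong_AE, eventually_elim)
    case (elim \<omega>)
    then show ?case
      by (cases "snd \<omega> c0 = 1") (auto simp: S_def S1_def S2_def indicator_def XU_def XT_def)
  qed
  also have "\<dots> = emeasure M S1 + emeasure M S2"
    using Sm by (subst nn_integral_add) auto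
  also have "emeasure M S1 = (\<integral>\<^sup>+x. indicator (A \<times> {1}) x * emeasure (\<kappa>1 x) B \<partial>P)"
    using cl1 A2 B by (simp add: is_cond_law_def S1_def)
  also have "\<dots> = (\<integral>\<^sup>+t. indicator A t * emeasure (\<kappa>1 (t,1)) B \<partial>PX) / 2"
    using A B by (intro setint_u) auto
  also have "emeasure M S2 = (\<integral>\<^sup>+x. indicator (A \<times> {2}) x * emeasure (\<kappa>1 x) B \<partial>P)"
    using cl1 A2 B by (simp add: is_cond_law_def S2_def)
  also have "\<dots> = (\<integral>\<^sup>+t. indicator A t * emeasure (\<kappa>1 (t,2)) B \<partial>PX) / 2"
    using A B by (intro setint_u) auto
  also have "(\<integral>\<^sup>+t. indicator A t * emeasure (\<kappa>1 (t,1)) B \<partial>PX) / 2 + (\<integral>\<^sup>+t. indicator A t * emeasure (\<kappa>1 (t,2)) B \<partial>PX) / 2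
      = (\<integral>\<^sup>+t. indicator A t * emeasure (\<kappa>1 (t,1)) B / 2 + indicator A t * emeasure (\<kappa>1 (t,2)) B / 2 \<partial>PX)"
    using A B by (simp add: nn_integral_add nn_integral_divide)
  also have "\<dots> = (\<integral>\<^sup>+t. indicator A t * ((emeasure (\<kappa>1 (t,1)) B + emeasure (\<kappa>1 (t,2)) B) / 2) \<partial>PX)"
    by (intro nn_integral_cong) (simp add: divide_ennreal_def distrib_left distrib_right mult.assoc)
  finally show ?thesis .
qed

lemma probPX: "prob_space PX" using probM by (intro prob_space.prob_space_distr) auto

lemma AE1: "AE t in PX. \<kappa>1 (t,2) = shift (\<delta> t) (\<kappa>1 (t,1))"
proof (rule AE_measure_eq_rats)
  fix x show "prob_space (\<kappa>1 (x,2)) \<and> sets (\<kappa>1 (x,2)) = sets borel" using k1_props by auto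
  show "prob_space (shift (\<delta> x) (\<kappa>1 (x,1))) \<and> sets (shift (\<delta> x) (\<kappa>1 (x,1))) = sets borel"
    using shift_props[OF k1_props(1,2)] by auto
next
  fix q :: real
  have m1: "(\<lambda>t. emeasure (\<kappa>1 (t,2)) {..q}) \<in> borel_measurable PX"
    using measurable_compose[OF pairu_meas k1_emeas[of "{..q}"]] by simp
  have m2: "(\<lambda>t. emeasure (shift (\<delta> t) (\<kappa>1 (t,1))) {..q}) \<in> borel_measurable PX"
    using measurable_compose[OF pairu_meas shiftk_emeas[of "{..q}"]] by simp
  show "AE x in PX. emeasure (\<kappa>1 (x,2)) {..q} = emeasure (shift (\<delta> x) (\<kappa>1 (x,1))) {..q}"
    by (rule AE_eq_from_setint[OF probPX m1 m2]) (simp add: E1_setint)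
qed

lemma AE2: "AE t in PX. \<kappa>2 t = mix (\<kappa>1 (t,1)) (\<kappa>1 (t,2))"
proof (rule AE_measure_eq_rats)
  fix x show "prob_space (\<kappa>2 x) \<and> sets (\<kappa>2 x) = sets borel" using k2_props by auto
  show "prob_space (mix (\<kappa>1 (x,1)) (\<kappa>1 (x,2))) \<and> sets (mix (\<kappa>1 (x,1)) (\<kappa>1 (x,2))) = sets borel"
    using mix_prob[OF k1_props(1) k1_props(1) k1_props(2) k1_props(2)] mix_sets[OF k1_props(1) k1_props(1) k1_props(2) k1_props(2)]
    by auto
next
  fix q :: real
  have m1: "(\<lambda>t. emeasure (\<kappa>2 t) {..q}) \<in> borel_measurable PX"
    using k2_emeas[of "{..q}"] by simp
  have m2: "(\<lambda>t. (emeasure (\<kappa>1 (t,1)) {..q} + emeasure (\<kappa>1 (t,2)) {..q}) / 2) \<in> borel_measurable PX"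
    using measurable_compose[OF pairu_meas k1_emeas[of "{..q}"], of 1] measurable_compose[OF pairu_meas k1_emeas[of "{..q}"], of 2]
    by simp
  have "AE x in PX. emeasure (\<kappa>2 x) {..q} = (emeasure (\<kappa>1 (x,1)) {..q} + emeasure (\<kappa>1 (x,2)) {..q}) / 2"
    by (rule AE_eq_from_setint[OF probPX m1 m2]) (simp add: E2_setint)
  then show "AE x in PX. emeasure (\<kappa>2 x) {..q} = emeasure (mix (\<kappa>1 (x,1)) (\<kappa>1 (x,2))) {..q}"
    by (rule AE_mp) (auto simp: mix_emeasure[OF k1_props(1) k1_props(1) k1_props(2) k1_props(2)])
qed

lemma PX_eq: "distr P SXT fst = PX"
  by (subst distr_distr) (auto simp: comp_def XU_def XT_def[abs_def])

lemma AE_P: "AE x in P. snd x \<in> {1,2} \<and> \<kappa>1 (fst x,2) = shift (\<delta> (fst x)) (\<kappa>1 (fst x,1)) \<and> \<kappa>2 (fst x) = mix (\<kappa>1 (fst x,1)) (\<kappa>1 (fst x,2))"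
proof -
  have fP: "fst \<in> P \<rightarrow>\<^sub>M SXT" by simp
  have a: "AE x in P. \<kappa>1 (fst x,2) = shift (\<delta> (fst x)) (\<kappa>1 (fst x,1)) \<and> \<kappa>2 (fst x) = mix (\<kappa>1 (fst x,1)) (\<kappa>1 (fst x,2))"
    using AE_conj_iff[THEN iffD2, OF conjI[OF AE1 AE2]] unfolding PX_eq[symmetric]
    by (rule AE_distrD[OF fP])
  have p: "{x \<in> space SXU. snd x \<in> {1,2}} \<in> sets SXU"
    using measurable_sets[OF snd_SXU, of "{1,2}"] by (simp add: vimage_def Int_def conj_commute)
  have b: "AE x in P. snd x \<in> {1,2}"
    using AE_U12[OF c0_node] by (subst AE_distr_iff[OF Y_meas p]) (auto simp: XU_def)
  show ?thesis using a b by eventually_elim auto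
qed

lemma part1_bound:
  "(\<integral>\<^sup>+x. wasserstein1 (\<kappa>1 x) (\<kappa>2 (fst x)) \<partial>P) \<le> ennreal (\<sigma> l / (sqrt pi * real (NN n l)))"
proof -
  have "(\<integral>\<^sup>+x. wasserstein1 (\<kappa>1 x) (\<kappa>2 (fst x)) \<partial>P) \<le> (\<integral>\<^sup>+x. ennreal (\<bar>\<delta> (fst x)\<bar> / 2) \<partial>P)"
  proof (rule nn_integral_mono_AE)
    show "AE x in P. wasserstein1 (\<kappa>1 x) (\<kappa>2 (fst x)) \<le> ennreal (\<bar>\<delta> (fst x)\<bar> / 2)"
      using AE_P
    proof eventually_elim
      case (elim x)
      obtain t u where x: "x = (t,u)" by (cases x)
      have K: "prob_space (\<kappa>1 (t,1))" "sets (\<kappa>1 (t,1)) = sets borel" using k1_props by auto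
      from elim x have u: "u = 1 \<or> u = 2" and e1: "\<kappa>1 (t,2) = shift (\<delta> t) (\<kappa>1 (t,1))"
        and e2: "\<kappa>2 t = mix (\<kappa>1 (t,1)) (\<kappa>1 (t,2))" by auto
      show ?case
      proof (cases "u = 1")
        case True
        then show ?thesis using W1_bound1[OF K, of "\<delta> t"] x e1 e2 by simp
      next
        case False
        then have "u = 2" using u by auto
        then show ?thesis using W1_bound2[OF K, of "\<delta> t"] x e1 e2 by simp
      qed
    qed
  qed
  also have "\<dots> = (\<integral>\<^sup>+\<omega>. ennreal (\<bar>\<delta> (X \<omega>)\<bar> / 2) \<partial>M)"
    by (subst nn_integral_distr) (auto simp: XU_def XT_def)
  also have "\<dots> = (\<integral>\<^sup>+\<omega>. ennreal (\<sigma> l / (2 * real (NN n l))) * ennreal \<bar>fst \<omega> (c0,1) - fst \<omega> (c0,2)\<bar> \<partial>M)"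
  proof (intro nn_integral_cong)
    fix \<omega>
    have pl: "real (NN n l) > 0" using NN_pos[OF n_pos] l by auto
    have e: "mutil \<theta> \<sigma> \<omega> l ix 2 - mutil \<theta> \<sigma> \<omega> l ix 1 = \<sigma> l * (fst \<omega> (c0,2) - fst \<omega> (c0,1))"
      by (rule a_diff)
    have "\<bar>\<delta> (X \<omega>)\<bar> = \<bar>\<sigma> l * (fst \<omega> (c0,2) - fst \<omega> (c0,1))\<bar> / real (NN n l)"
      unfolding \<delta>_def XT_def using pl by (simp only: fst_conv snd_conv e abs_divide abs_of_nat)
    also have "\<dots> = \<sigma> l * \<bar>fst \<omega> (c0,1) - fst \<omega> (c0,2)\<bar> / real (NN n l)"
      using \<sigma>_pos by (simp add: abs_mult abs_minus_commute)
    finally have "\<bar>\<delta> (X \<omega>)\<bar> / 2 = \<sigma> l / (2 * real (NN n l)) * \<bar>fst \<omega> (c0,1) - fst \<omega> (c0,2)\<bar>"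
      by simp
    then show "ennreal (\<bar>\<delta> (X \<omega>)\<bar> / 2) = ennreal (\<sigma> l / (2 * real (NN n l))) * ennreal \<bar>fst \<omega> (c0,1) - fst \<omega> (c0,2)\<bar>"
      using pl \<sigma>_pos by (simp add: ennreal_mult[symmetric])
  qed
  also have "\<dots> = ennreal (\<sigma> l / (2 * real (NN n l))) * ennreal (2 / sqrt pi)"
    using SS_absdiff[OF c0_node] by (subst nn_integral_cmult) auto
  also have "\<dots> = ennreal (\<sigma> l / (sqrt pi * real (NN n l)))"
    using \<sigma>_pos by (simp add: ennreal_mult[symmetric] field_simps)
  finally show ?thesis .
qed

end


lemma reidx_meas:
  assumes t: "t ` K \<subseteq> I"
  shows "(\<lambda>x. \<lambda>k\<in>K. x (t k)) \<in> PiM I (\<lambda>_. Nd) \<rightarrow>\<^sub>M PiM K (\<lambda>_. Nd)"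
proof (rule measurable_PiM_single')
  fix k assume k: "k \<in> K"
  then have tk: "t k \<in> I" using t by auto
  have "(\<lambda>x. x (t k)) \<in> PiM I (\<lambda>_. Nd) \<rightarrow>\<^sub>M Nd" by (rule measurable_component_singleton[OF tk])
  moreover have "\<And>x. (\<lambda>k\<in>K. x (t k)) k = x (t k)" using k by simp
  ultimately show "(\<lambda>x. (\<lambda>k\<in>K. x (t k)) k) \<in> PiM I (\<lambda>_. Nd) \<rightarrow>\<^sub>M Nd" by simp
next
  show "(\<lambda>x k. (\<lambda>k\<in>K. x (t k)) k) \<in> space (PiM I (\<lambda>_. Nd)) \<rightarrow> (\<Pi>\<^sub>E k\<in>K. space Nd)"
    by (auto simp: PiE_def extensional_def)
qed

lemma MI_law:
  assumes I: "finite I" and t: "inj_on t K" "t ` K \<subseteq> I"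
    and k[measurable]: "k \<in> borel_measurable (PiM K (\<lambda>_. Nd))"
  shows "(\<integral>\<^sup>+x. k (\<lambda>j\<in>K. x (t j)) \<partial>PiM I (\<lambda>_. Nd)) = (\<integral>\<^sup>+y. k y \<partial>PiM K (\<lambda>_. Nd))"
proof -
  have d: "distr (PiM I (\<lambda>_. Nd)) (PiM K (\<lambda>_. Nd)) (\<lambda>x. \<lambda>j\<in>K. x (t j)) = PiM K (\<lambda>_. Nd)"
    using distr_PiM_reindex[of I "\<lambda>_. Nd" t K] t prob_Nd by auto
  have "(\<integral>\<^sup>+y. k y \<partial>distr (PiM I (\<lambda>_. Nd)) (PiM K (\<lambda>_. Nd)) (\<lambda>x. \<lambda>j\<in>K. x (t j)))
     = (\<integral>\<^sup>+x. k (\<lambda>j\<in>K. x (t j)) \<partial>PiM I (\<lambda>_. Nd))"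
    using k by (intro nn_integral_distr[OF reidx_meas[OF t(2)]]) simp
  then show ?thesis unfolding d ..
qed

lemma MI_indep:
  fixes I :: "'i set" and K :: "'k set" and t :: "'k \<Rightarrow> 'i" and S :: "'i set"
    and h :: "real \<Rightarrow> real \<Rightarrow> ennreal"
  assumes I: "finite I" and S: "S \<subseteq> I" and t: "inj_on t K" "t ` K \<subseteq> I - S"
    and f[measurable]: "f \<in> borel_measurable (PiM I (\<lambda>_. Nd))"
    and fS: "\<And>x y. (\<And>c. c \<in> S \<Longrightarrow> x c = y c) \<Longrightarrow> f x = f y"
    and g[measurable]: "g \<in> borel_measurable (PiM K (\<lambda>_. Nd))"
    and h[measurable]: "(\<lambda>(a,b). h a b) \<in> borel_measurable (borel \<Otimes>\<^sub>M borel)"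
  shows "(\<integral>\<^sup>+x. h (f x) (g (\<lambda>j\<in>K. x (t j))) \<partial>PiM I (\<lambda>_. Nd))
       = (\<integral>\<^sup>+x. (\<integral>\<^sup>+y. h (f x) (g y) \<partial>PiM K (\<lambda>_. Nd)) \<partial>PiM I (\<lambda>_. Nd))"
proof -
  interpret P: product_prob_space "\<lambda>_::'i. Nd" I by (intro product_prob_spaceI prob_Nd)
  interpret Q: product_prob_space "\<lambda>_::'k. Nd" K by (intro product_prob_spaceI prob_Nd)
  let ?PS = "PiM S (\<lambda>_. Nd)" and ?PR = "PiM (I - S) (\<lambda>_. Nd)" and ?PK = "PiM K (\<lambda>_. Nd)"
  have sfP: "sigma_finite_measure (PiM J (\<lambda>_. Nd))" for J :: "'i set"
    by (rule prob_space_imp_sigma_finite[OF prob_space_PiM[OF prob_Nd]])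
  have sfK: "sigma_finite_measure ?PK"
    by (rule prob_space_imp_sigma_finite[OF prob_space_PiM[OF prob_Nd]])
  interpret PQ: pair_sigma_finite ?PS ?PR by (intro pair_sigma_finite.intro sfP)
  interpret PKs: sigma_finite_measure ?PK by (rule sfK)
  have finS: "finite S" using I S by (rule rev_finite_subset)
  have finR: "finite (I - S)" using I by simp
  have IU: "S \<union> (I - S) = I" using S by auto
  have dm: "distr (?PS \<Otimes>\<^sub>M ?PR) (PiM I (\<lambda>_. Nd)) (merge S (I - S)) = PiM I (\<lambda>_. Nd)"
    using P.distr_merge[of S "I - S", OF _ finS finR] IU by simp
  have mm: "merge S (I - S) \<in> ?PS \<Otimes>\<^sub>M ?PR \<rightarrow>\<^sub>M PiM I (\<lambda>_. Nd)"
    using measurable_merge[of S "I - S" "\<lambda>_. Nd"] IU by simp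
  have tR: "t ` K \<subseteq> I - S" using t by auto
  have rd: "distr ?PR ?PK (\<lambda>b. \<lambda>j\<in>K. b (t j)) = ?PK"
    using distr_PiM_reindex[of "I - S" "\<lambda>_. Nd" t K] t prob_Nd by auto
  have rm: "(\<lambda>x. \<lambda>j\<in>K. x (t j)) \<in> PiM I (\<lambda>_. Nd) \<rightarrow>\<^sub>M ?PK"
    using t by (intro reidx_meas) auto
  have rmR: "(\<lambda>x. \<lambda>j\<in>K. x (t j)) \<in> ?PR \<rightarrow>\<^sub>M ?PK" by (rule reidx_meas[OF tR])
  define \<Phi> where "\<Phi> w = (\<integral>\<^sup>+y. h w (g y) \<partial>?PK)" for w
  have \<Phi>m[measurable]: "\<Phi> \<in> borel_measurable borel"
    unfolding \<Phi>_def by measurable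
  define b0 where "b0 = (\<lambda>c\<in>I - S. 0::real)"
  have b0: "b0 \<in> space ?PR" by (auto simp: b0_def space_PiM)
  define F where "F a = f (merge S (I - S) (a, b0))" for a
  have Fm[measurable]: "F \<in> borel_measurable ?PS"
  proof -
    have "(\<lambda>a. (a, b0)) \<in> ?PS \<rightarrow>\<^sub>M ?PS \<Otimes>\<^sub>M ?PR" using b0 by (intro measurable_Pair) auto
    then have "(\<lambda>a. merge S (I - S) (a, b0)) \<in> ?PS \<rightarrow>\<^sub>M PiM I (\<lambda>_. Nd)"
      by (rule measurable_compose[OF _ mm])
    then show ?thesis unfolding F_def by (rule measurable_compose[OF _ f])
  qed
  have fmerge: "f (merge S (I - S) (a, b)) = F a" for a b
    unfolding F_def by (rule fS) (simp add: merge_def)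
  have tmerge: "(\<lambda>j\<in>K. merge S (I - S) (a, b) (t j)) = (\<lambda>j\<in>K. b (t j))" for a b
    using t by (auto simp: merge_def fun_eq_iff)
  have Hm: "(\<lambda>x. h (f x) (g (\<lambda>j\<in>K. x (t j)))) \<in> borel_measurable (PiM I (\<lambda>_. Nd))"
    using rm by measurable
  have "(\<integral>\<^sup>+x. h (f x) (g (\<lambda>j\<in>K. x (t j))) \<partial>PiM I (\<lambda>_. Nd))
      = (\<integral>\<^sup>+p. h (f (merge S (I - S) p)) (g (\<lambda>j\<in>K. merge S (I - S) p (t j))) \<partial>(?PS \<Otimes>\<^sub>M ?PR))"
  proof -
    have "(\<integral>\<^sup>+x. h (f x) (g (\<lambda>j\<in>K. x (t j))) \<partial>distr (?PS \<Otimes>\<^sub>M ?PR) (PiM I (\<lambda>_. Nd)) (merge S (I - S)))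
      = (\<integral>\<^sup>+p. h (f (merge S (I - S) p)) (g (\<lambda>j\<in>K. merge S (I - S) p (t j))) \<partial>(?PS \<Otimes>\<^sub>M ?PR))"
      using Hm by (intro nn_integral_distr[OF mm]) simp
    then show ?thesis unfolding dm .
  qed
  also have "\<dots> = (\<integral>\<^sup>+p. h (F (fst p)) (g (\<lambda>j\<in>K. snd p (t j))) \<partial>(?PS \<Otimes>\<^sub>M ?PR))"
  proof (intro nn_integral_cong)
    fix p :: "('i \<Rightarrow> real) \<times> ('i \<Rightarrow> real)"
    obtain a b where p: "p = (a,b)" by (cases p)
    show "h (f (merge S (I - S) p)) (g (\<lambda>j\<in>K. merge S (I - S) p (t j))) = h (F (fst p)) (g (\<lambda>j\<in>K. snd p (t j)))"
      unfolding p fst_conv snd_conv fmerge tmerge ..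
  qed
  also have "\<dots> = (\<integral>\<^sup>+a. (\<integral>\<^sup>+b. h (F a) (g (\<lambda>j\<in>K. b (t j))) \<partial>?PR) \<partial>?PS)"
  proof -
    have m1: "(\<lambda>p. F (fst p)) \<in> borel_measurable (?PS \<Otimes>\<^sub>M ?PR)" by (rule measurable_compose[OF measurable_fst Fm])
    have m2: "(\<lambda>p. g (\<lambda>j\<in>K. snd p (t j))) \<in> borel_measurable (?PS \<Otimes>\<^sub>M ?PR)"
      by (rule measurable_compose[OF measurable_compose[OF measurable_snd rmR] g])
    have m: "(\<lambda>p. h (F (fst p)) (g (\<lambda>j\<in>K. snd p (t j)))) \<in> borel_measurable (?PS \<Otimes>\<^sub>M ?PR)"
      using measurable_compose[OF measurable_Pair[OF m1 m2] h] by simp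
    show ?thesis using PQ.M2.nn_integral_fst[OF m] by simp
  qed
  also have "\<dots> = (\<integral>\<^sup>+a. \<Phi> (F a) \<partial>?PS)"
  proof (intro nn_integral_cong)
    fix a
    show "(\<integral>\<^sup>+b. h (F a) (g (\<lambda>j\<in>K. b (t j))) \<partial>?PR) = \<Phi> (F a)"
    proof -
      have "(\<integral>\<^sup>+y. h (F a) (g y) \<partial>distr ?PR ?PK (\<lambda>b. \<lambda>j\<in>K. b (t j))) = (\<integral>\<^sup>+b. h (F a) (g (\<lambda>j\<in>K. b (t j))) \<partial>?PR)"
        by (rule nn_integral_distr[OF rmR]) measurable
      then show ?thesis unfolding \<Phi>_def rd ..
    qed
  qed
  also have "\<dots> = (\<integral>\<^sup>+p. \<Phi> (F (fst p)) \<partial>(?PS \<Otimes>\<^sub>M ?PR))"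
  proof -
    have m1: "(\<lambda>p. F (fst p)) \<in> borel_measurable (?PS \<Otimes>\<^sub>M ?PR)" by (rule measurable_compose[OF measurable_fst Fm])
    have m: "(\<lambda>p. \<Phi> (F (fst p))) \<in> borel_measurable (?PS \<Otimes>\<^sub>M ?PR)"
      by (rule measurable_compose[OF m1 \<Phi>m])
    have "(\<integral>\<^sup>+a. (\<integral>\<^sup>+b. \<Phi> (F a) \<partial>?PR) \<partial>?PS) = (\<integral>\<^sup>+a. \<Phi> (F a) \<partial>?PS)"
      by (simp add: prob_space.emeasure_space_1[OF prob_space_PiM[OF prob_Nd]])
    then show ?thesis using PQ.M2.nn_integral_fst[OF m] by simp
  qed
  also have "\<dots> = (\<integral>\<^sup>+p. \<Phi> (f (merge S (I - S) p)) \<partial>(?PS \<Otimes>\<^sub>M ?PR))"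
  proof (intro nn_integral_cong)
    fix p :: "('i \<Rightarrow> real) \<times> ('i \<Rightarrow> real)"
    obtain a b where p: "p = (a,b)" by (cases p)
    show "\<Phi> (F (fst p)) = \<Phi> (f (merge S (I - S) p))"
      unfolding p fst_conv snd_conv fmerge ..
  qed
  also have "\<dots> = (\<integral>\<^sup>+x. \<Phi> (f x) \<partial>PiM I (\<lambda>_. Nd))"
  proof -
    have "(\<integral>\<^sup>+x. \<Phi> (f x) \<partial>distr (?PS \<Otimes>\<^sub>M ?PR) (PiM I (\<lambda>_. Nd)) (merge S (I - S)))
      = (\<integral>\<^sup>+p. \<Phi> (f (merge S (I - S) p)) \<partial>(?PS \<Otimes>\<^sub>M ?PR))"
      by (rule nn_integral_distr[OF mm]) measurable
    then show ?thesis unfolding dm ..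
  qed
  finally show ?thesis unfolding \<Phi>_def .
qed


lemma Nd_int: "integrable Nd (\<lambda>x. x)"
proof -
  have "has_bochner_integral lborel (\<lambda>x. std_normal_density x * x ^ (2 * 0 + 1)) 0"
    by (rule std_normal_moment_odd)
  then have "integrable lborel (\<lambda>x. std_normal_density x *\<^sub>R x)"
    by (simp add: has_bochner_integral_iff)
  then show ?thesis
    by (subst integrable_density) (auto simp: normal_density_nonneg)
qed

lemma MX_coord_int:
  assumes d: "d \<in> IX n L"
  shows "integrable (MX n L) (\<lambda>x. x d)"
proof -
  have dist: "distr (MX n L) lborel (\<lambda>x. x d) = Nd" and m: "(\<lambda>x. x d) \<in> MX n L \<rightarrow>\<^sub>M lborel"
    using MX_coord_distributed[OF d] by (auto simp: distributed_def)
  have "integrable (distr (MX n L) lborel (\<lambda>x. x d)) (\<lambda>x. x)" unfolding dist by (rule Nd_int)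
  then show ?thesis using m by (subst (asm) integrable_distr_eq) auto
qed

lemma SS_coord_int: "integrable (supersample_space n L) (\<lambda>\<omega>. fst \<omega> d)"
proof (cases "d \<in> IX n L")
  case True
  interpret U: prob_space "MU n L" by (rule prob_MU)
  have "distr (supersample_space n L) (MX n L) fst = MX n L"
    unfolding SS_eq by (rule U.distr_pair_fst)
  moreover have fm: "fst \<in> supersample_space n L \<rightarrow>\<^sub>M MX n L" unfolding SS_eq by simp
  moreover have "(\<lambda>x. x d) \<in> borel_measurable (MX n L)"
    using MX_coord_distributed[OF True] by (auto simp: distributed_def cong: measurable_cong_sets)
  ultimately show ?thesis
    using MX_coord_int[OF True] integrable_distr_eq[OF fm, of "\<lambda>x. x d"] by simp
next
  case False
  interpret prob_space "supersample_space n L" by (rule prob_SS)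
  have "integrable (supersample_space n L) (\<lambda>\<omega>. fst \<omega> d) \<longleftrightarrow> integrable (supersample_space n L) (\<lambda>\<omega>. undefined :: real)"
    by (intro Bochner_Integration.integrable_cong) (auto simp: fst_undef[OF _ False])
  then show ?thesis by simp
qed

definition Sabs :: "(nat \<Rightarrow> nat) \<Rightarrow> nat \<Rightarrow> outcome \<Rightarrow> real" where
  "Sabs n L \<omega> = (\<Sum>d\<in>IX n L. \<bar>fst \<omega> d\<bar>) + \<bar>undefined :: real\<bar>"

lemma Sabs_int: "integrable (supersample_space n L) (Sabs n L)"
proof -
  interpret prob_space "supersample_space n L" by (rule prob_SS)
  have "integrable (supersample_space n L) (\<lambda>\<omega>. \<Sum>d\<in>IX n L. \<bar>fst \<omega> d\<bar>)"
    by (rule Bochner_Integration.integrable_sum) (rule Bochner_Integration.integrable_abs[OF SS_coord_int])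
  then show ?thesis unfolding Sabs_def[abs_def] by (intro Bochner_Integration.integrable_add) auto
qed

lemma Sabs_meas[measurable]: "Sabs n L \<in> borel_measurable (supersample_space n L)"
  unfolding Sabs_def[abs_def] by measurable

lemma Sabs_nonneg: "0 \<le> Sabs n L \<omega>" by (simp add: Sabs_def sum_nonneg)

lemma coord_le_Sabs:
  assumes "\<omega> \<in> space (supersample_space n L)"
  shows "\<bar>fst \<omega> d\<bar> \<le> Sabs n L \<omega>"
proof (cases "d \<in> IX n L")
  case True
  have "\<bar>fst \<omega> d\<bar> \<le> (\<Sum>d\<in>IX n L. \<bar>fst \<omega> d\<bar>)"
    using True finite_IX by (intro member_le_sum) auto
  then show ?thesis by (simp add: Sabs_def)
next
  case False
  then show ?thesis using assms by (simp add: Sabs_def fst_undef sum_nonneg)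
qed

lemma int_by_Sabs:
  assumes f[measurable]: "f \<in> borel_measurable (supersample_space n L)"
    and b: "\<And>\<omega>. \<omega> \<in> space (supersample_space n L) \<Longrightarrow> \<bar>f \<omega>\<bar> \<le> a + b * Sabs n L \<omega>"
  shows "integrable (supersample_space n L) f"
proof -
  interpret prob_space "supersample_space n L" by (rule prob_SS)
  have "integrable (supersample_space n L) (\<lambda>\<omega>. b * Sabs n L \<omega>)"
    using Sabs_int by (rule integrable_mult_right)
  then have i: "integrable (supersample_space n L) (\<lambda>\<omega>. a + b * Sabs n L \<omega>)"
    by (intro Bochner_Integration.integrable_add) auto
  show ?thesis
  proof (rule Bochner_Integration.integrable_bound[OF i f])
    show "AE x in supersample_space n L. norm (f x) \<le> norm (a + b * Sabs n L x)"
    proof (intro AE_I2)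
      fix x assume "x \<in> space (supersample_space n L)"
      then have "\<bar>f x\<bar> \<le> a + b * Sabs n L x" by (rule b)
      then show "norm (f x) \<le> norm (a + b * Sabs n L x)" by simp
    qed
  qed
qed

lemma sum_sel_bound:
  assumes "\<omega> \<in> space (supersample_space n L)"
  shows "\<bar>\<Sum>k\<in>A. \<sigma> k * fst \<omega> (d k)\<bar> \<le> (\<Sum>k\<in>A. \<bar>\<sigma> k\<bar>) * Sabs n L \<omega>"
proof -
  have "\<bar>\<Sum>k\<in>A. \<sigma> k * fst \<omega> (d k)\<bar> \<le> (\<Sum>k\<in>A. \<bar>\<sigma> k * fst \<omega> (d k)\<bar>)" by (rule sum_abs)
  also have "\<dots> \<le> (\<Sum>k\<in>A. \<bar>\<sigma> k\<bar> * Sabs n L \<omega>)"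
    using coord_le_Sabs[OF assms] by (intro sum_mono) (simp add: abs_mult mult_left_mono)
  also have "\<dots> = (\<Sum>k\<in>A. \<bar>\<sigma> k\<bar>) * Sabs n L \<omega>" by (simp add: sum_distrib_right)
  finally show ?thesis .
qed


locale part3 =
  fixes n :: "nat \<Rightarrow> nat" and L :: nat and \<theta> :: real and \<sigma> :: "nat \<Rightarrow> real"
  assumes L1: "L \<ge> 1" and n_pos: "\<And>k. k \<in> {1..L} \<Longrightarrow> n k \<ge> 1"
    and \<sigma>_pos: "\<And>k. k \<in> {1..L} \<Longrightarrow> \<sigma> k > 0"
begin

abbreviation "M \<equiv> supersample_space n L"
abbreviation "W \<equiv> hypW n L \<theta> \<sigma>"

definition Zm :: "nat \<Rightarrow> nat list \<Rightarrow> outcome \<Rightarrow> real" where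
  "Zm m i \<omega> = \<theta> + (\<Sum>k\<in>{1..L}. \<sigma> k * fst \<omega> ((k, take k i),
      (if k \<le> m then snd \<omega> (k, take k i) else 3 - snd \<omega> (k, take k i))))"

definition "K0 = (\<Sum>k\<in>{1..L}. \<bar>\<sigma> k\<bar>)"

lemma sel_term_meas[measurable]:
  "(\<lambda>\<omega>. fst \<omega> (c, h (snd \<omega> c))) \<in> borel_measurable M"
  by (rule measurable_compose_countable[where f="\<lambda>j \<omega>. fst \<omega> (c, h j)", OF coordX coordU])

lemma Zm_meas[measurable]: "Zm m i \<in> borel_measurable M"
proof -
  have "(\<lambda>\<omega>. fst \<omega> ((k, take k i), (if k \<le> m then snd \<omega> (k, take k i) else 3 - snd \<omega> (k, take k i)))) \<in> borel_measurable M" for k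
    using sel_term_meas[of "(k, take k i)" "\<lambda>j. if k \<le> m then j else 3 - j"] by simp
  then show ?thesis unfolding Zm_def[abs_def] by measurable
qed

lemma ZL: "i \<in> idx n L \<Longrightarrow> Zm L i \<omega> = musel \<theta> \<sigma> \<omega> L i"
  using L1 by (simp add: Zm_def musel_formula idx_def sel_def)

lemma Z_fl:
  assumes i: "i \<in> idx n L" and m: "m \<in> {1..L}" and u: "snd \<omega> (m, take m i) \<in> {1,2}"
  shows "Zm (m - 1) i (fl (m, take m i) \<omega>) = Zm m i \<omega>"
  unfolding Zm_def
proof (intro arg_cong2[where f="(+)"] refl sum.cong)
  fix k assume k: "k \<in> {1..L}"
  have li: "length i = L" using i by (simp add: idx_def)
  show "\<sigma> k * fst (fl (m, take m i) \<omega>) ((k, take k i), if k \<le> m - 1 then snd (fl (m, take m i) \<omega>) (k, take k i) else 3 - snd (fl (m, take m i) \<omega>) (k, take k i))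
      = \<sigma> k * fst \<omega> ((k, take k i), if k \<le> m then snd \<omega> (k, take k i) else 3 - snd \<omega> (k, take k i))"
  proof (cases "k = m")
    case True
    then show ?thesis using u m by (auto simp: fl_def)
  next
    case False
    then have "(k, take k i) \<noteq> (m, take m i)" by simp
    then show ?thesis using False m by (auto simp: fl_def)
  qed
qed

lemma musel_bound:
  assumes "\<omega> \<in> space M" "length i = L"
  shows "\<bar>musel \<theta> \<sigma> \<omega> L i\<bar> \<le> \<bar>\<theta>\<bar> + K0 * Sabs n L \<omega>"
proof -
  have "\<bar>musel \<theta> \<sigma> \<omega> L i\<bar> = \<bar>\<theta> + (\<Sum>k\<in>{1..L}. \<sigma> k * fst \<omega> ((k, take k i), snd \<omega> (k, take k i)))\<bar>"
    using assms L1 by (simp add: musel_formula sel_def)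
  also have "\<dots> \<le> \<bar>\<theta>\<bar> + \<bar>\<Sum>k\<in>{1..L}. \<sigma> k * fst \<omega> ((k, take k i), snd \<omega> (k, take k i))\<bar>" by (rule abs_triangle_ineq)
  also have "\<dots> \<le> \<bar>\<theta>\<bar> + K0 * Sabs n L \<omega>"
    unfolding K0_def using sum_sel_bound[OF assms(1)] by (intro add_left_mono) auto
  finally show ?thesis .
qed

lemma Zm_bound:
  assumes "\<omega> \<in> space M"
  shows "\<bar>Zm m i \<omega>\<bar> \<le> \<bar>\<theta>\<bar> + K0 * Sabs n L \<omega>"
proof -
  have "\<bar>Zm m i \<omega>\<bar> \<le> \<bar>\<theta>\<bar> + \<bar>\<Sum>k\<in>{1..L}. \<sigma> k * fst \<omega> ((k, take k i),
      (if k \<le> m then snd \<omega> (k, take k i) else 3 - snd \<omega> (k, take k i)))\<bar>"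
    unfolding Zm_def by (rule abs_triangle_ineq)
  also have "\<dots> \<le> \<bar>\<theta>\<bar> + K0 * Sabs n L \<omega>"
    unfolding K0_def using sum_sel_bound[OF assms] by (intro add_left_mono) auto
  finally show ?thesis .
qed

lemma NL_pos: "real (NN n L) > 0" using NN_pos[OF n_pos, of L] by simp

lemma W_bound:
  assumes "\<omega> \<in> space M"
  shows "\<bar>W \<omega>\<bar> \<le> \<bar>\<theta>\<bar> + K0 * Sabs n L \<omega>"
proof -
  have "\<bar>W \<omega>\<bar> = (1 / real (NN n L)) * \<bar>\<Sum>i\<in>idx n L. musel \<theta> \<sigma> \<omega> L i\<bar>"
    using NL_pos by (simp add: hypW_def abs_mult)
  also have "\<dots> \<le> (1 / real (NN n L)) * (\<Sum>i\<in>idx n L. \<bar>\<theta>\<bar> + K0 * Sabs n L \<omega>)"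
    using NL_pos by (intro mult_left_mono order_trans[OF sum_abs] sum_mono musel_bound[OF assms])
      (auto simp: idx_def)
  also have "\<dots> = \<bar>\<theta>\<bar> + K0 * Sabs n L \<omega>"
    using NL_pos by (simp add: card_idx)
  finally show ?thesis .
qed

lemma int_WZ: "integrable M (\<lambda>\<omega>. \<bar>W \<omega> - Zm m i \<omega>\<bar>)"
proof (rule int_by_Sabs[where a="2 * \<bar>\<theta>\<bar>" and b="2 * K0"])
  fix \<omega> assume \<omega>: "\<omega> \<in> space M"
  show "\<bar>\<bar>W \<omega> - Zm m i \<omega>\<bar>\<bar> \<le> 2 * \<bar>\<theta>\<bar> + 2 * K0 * Sabs n L \<omega>"
    using W_bound[OF \<omega>] Zm_bound[OF \<omega>, of m i] by simp
qed measurable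

end


context part3
begin

definition "\<beta> m = 2 * \<sigma> m / (sqrt pi * real (NN n m))"

lemma beta_nonneg: "m \<in> {1..L} \<Longrightarrow> \<beta> m \<ge> 0"
  using \<sigma>_pos[of m] by (simp add: \<beta>_def)

lemma claimB:
  assumes i: "i \<in> idx n L" and m: "m \<in> {1..L}"
  shows "(\<integral>\<^sup>+\<omega>. ennreal \<bar>W \<omega> - Zm (m - 1) i \<omega>\<bar> \<partial>M) \<le> (\<integral>\<^sup>+\<omega>. ennreal \<bar>W \<omega> - Zm m i \<omega>\<bar> \<partial>M) + ennreal (\<beta> m)"
proof -
  define c where "c = (m, take m i)"
  have ixm: "take m i \<in> idx n m" using i m by (intro idx_take) auto
  have c: "c \<in> nodes n L" using ixm m by (simp add: c_def nodes_def)
  have Nm: "real (NN n m) > 0" using NN_pos[OF n_pos, of m] m by simp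
  have sm: "\<sigma> m > 0" using \<sigma>_pos m by simp
  have "(\<integral>\<^sup>+\<omega>. ennreal \<bar>W \<omega> - Zm (m - 1) i \<omega>\<bar> \<partial>M) = (\<integral>\<^sup>+\<omega>. ennreal \<bar>W (fl c \<omega>) - Zm (m - 1) i (fl c \<omega>)\<bar> \<partial>M)"
    by (rule fl_nn[OF c, symmetric]) measurable
  also have "\<dots> \<le> (\<integral>\<^sup>+\<omega>. ennreal \<bar>W \<omega> - Zm m i \<omega>\<bar> + ennreal (\<sigma> m / real (NN n m)) * ennreal \<bar>fst \<omega> (c,1) - fst \<omega> (c,2)\<bar> \<partial>M)"
  proof (rule nn_integral_mono_AE)
    show "AE \<omega> in M. ennreal \<bar>W (fl c \<omega>) - Zm (m - 1) i (fl c \<omega>)\<bar> \<le> ennreal \<bar>W \<omega> - Zm m i \<omega>\<bar> + ennreal (\<sigma> m / real (NN n m)) * ennreal \<bar>fst \<omega> (c,1) - fst \<omega> (c,2)\<bar>"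
      using AE_U12[OF c]
    proof eventually_elim
      case (elim \<omega>)
      have Z: "Zm (m - 1) i (fl c \<omega>) = Zm m i \<omega>" unfolding c_def by (rule Z_fl[OF i m elim[unfolded c_def]])
      have Wf: "W (fl c \<omega>) = W \<omega> + \<sigma> m * (fst \<omega> (c, 3 - snd \<omega> c) - fst \<omega> (c, snd \<omega> c)) / real (NN n m)"
        unfolding c_def by (rule hypW_fl[OF ixm m n_pos])
      have d: "\<bar>fst \<omega> (c, 3 - snd \<omega> c) - fst \<omega> (c, snd \<omega> c)\<bar> = \<bar>fst \<omega> (c,1) - fst \<omega> (c,2)\<bar>"
        using elim by (auto simp: abs_minus_commute)
      have "\<bar>W (fl c \<omega>) - Zm (m - 1) i (fl c \<omega>)\<bar> \<le> \<bar>W \<omega> - Zm m i \<omega>\<bar> + \<bar>\<sigma> m * (fst \<omega> (c, 3 - snd \<omega> c) - fst \<omega> (c, snd \<omega> c)) / real (NN n m)\<bar>"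
        unfolding Z Wf by linarith
      also have "\<bar>\<sigma> m * (fst \<omega> (c, 3 - snd \<omega> c) - fst \<omega> (c, snd \<omega> c)) / real (NN n m)\<bar> = \<sigma> m / real (NN n m) * \<bar>fst \<omega> (c,1) - fst \<omega> (c,2)\<bar>"
        using Nm sm d by (simp add: abs_mult abs_divide)
      finally have r: "\<bar>W (fl c \<omega>) - Zm (m - 1) i (fl c \<omega>)\<bar> \<le> \<bar>W \<omega> - Zm m i \<omega>\<bar> + \<sigma> m / real (NN n m) * \<bar>fst \<omega> (c,1) - fst \<omega> (c,2)\<bar>" .
      show ?case using r Nm sm by (simp add: ennreal_plus[symmetric] ennreal_mult[symmetric] del: ennreal_plus)
    qed
  qed
  also have "\<dots> = (\<integral>\<^sup>+\<omega>. ennreal \<bar>W \<omega> - Zm m i \<omega>\<bar> \<partial>M) + ennreal (\<sigma> m / real (NN n m)) * (\<integral>\<^sup>+\<omega>. ennreal \<bar>fst \<omega> (c,1) - fst \<omega> (c,2)\<bar> \<partial>M)"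
    by (subst nn_integral_add) (auto simp: nn_integral_cmult)
  also have "ennreal (\<sigma> m / real (NN n m)) * (\<integral>\<^sup>+\<omega>. ennreal \<bar>fst \<omega> (c,1) - fst \<omega> (c,2)\<bar> \<partial>M) = ennreal (\<beta> m)"
    using SS_absdiff[OF c] Nm sm by (simp add: ennreal_mult[symmetric] \<beta>_def mult.commute)
  finally show ?thesis .
qed

lemma telescope:
  assumes i: "i \<in> idx n L"
  shows "k \<le> L \<Longrightarrow> (\<integral>\<^sup>+\<omega>. ennreal \<bar>W \<omega> - Zm 0 i \<omega>\<bar> \<partial>M) \<le> (\<integral>\<^sup>+\<omega>. ennreal \<bar>W \<omega> - Zm k i \<omega>\<bar> \<partial>M) + ennreal (\<Sum>m\<in>{1..k}. \<beta> m)"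
proof (induction k)
  case 0
  then show ?case by simp
next
  case (Suc k)
  have m: "Suc k \<in> {1..L}" using Suc by simp
  have "(\<integral>\<^sup>+\<omega>. ennreal \<bar>W \<omega> - Zm 0 i \<omega>\<bar> \<partial>M) \<le> (\<integral>\<^sup>+\<omega>. ennreal \<bar>W \<omega> - Zm k i \<omega>\<bar> \<partial>M) + ennreal (\<Sum>m\<in>{1..k}. \<beta> m)"
    using Suc by simp
  also have "\<dots> \<le> ((\<integral>\<^sup>+\<omega>. ennreal \<bar>W \<omega> - Zm (Suc k) i \<omega>\<bar> \<partial>M) + ennreal (\<beta> (Suc k))) + ennreal (\<Sum>m\<in>{1..k}. \<beta> m)"
    using claimB[OF i m] by (intro add_right_mono) simp
  also have "\<dots> = (\<integral>\<^sup>+\<omega>. ennreal \<bar>W \<omega> - Zm (Suc k) i \<omega>\<bar> \<partial>M) + ennreal (\<Sum>m\<in>{1..Suc k}. \<beta> m)"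
  proof -
    have nn: "(\<Sum>m\<in>{1..k}. \<beta> m) \<ge> 0" using Suc by (intro sum_nonneg beta_nonneg) auto
    have "ennreal (\<Sum>m\<in>{1..Suc k}. \<beta> m) = ennreal (\<beta> (Suc k)) + ennreal (\<Sum>m\<in>{1..k}. \<beta> m)"
      using nn beta_nonneg[OF m] by (simp add: ennreal_plus add.commute)
    then show ?thesis by (simp add: add.assoc)
  qed
  finally show ?case .
qed

end


context part3
begin

abbreviation "PK \<equiv> PiM {1..L} (\<lambda>_::nat. Nd)"
definition "gg y = \<theta> + (\<Sum>k\<in>{1..L}. \<sigma> k * y k)"
definition "\<Phi> w = (\<integral>\<^sup>+y. ennreal \<bar>w - gg y\<bar> \<partial>PK)"
abbreviation "leaf0 \<omega> \<equiv> musel \<theta> \<sigma> \<omega> L (replicate L 0)"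

lemma gg_meas[measurable]: "gg \<in> borel_measurable PK"
proof -
  have c: "(\<lambda>y. y k) \<in> borel_measurable PK" if "k \<in> {1..L}" for k
    using measurable_component_singleton[OF that, of "\<lambda>_. Nd"] by (simp cong: measurable_cong_sets)
  have "(\<lambda>y. \<Sum>k\<in>{1..L}. \<sigma> k * y k) \<in> borel_measurable PK"
    by (rule borel_measurable_sum) (use c in measurable)
  then show ?thesis unfolding gg_def[abs_def] by measurable
qed

lemma Phi_meas[measurable]: "\<Phi> \<in> borel_measurable borel"
proof -
  interpret sigma_finite_measure PK by (rule prob_space_imp_sigma_finite[OF prob_space_PiM[OF prob_Nd]])
  show ?thesis unfolding \<Phi>_def[abs_def] by measurable
qed

lemma rep_node: "k \<in> {1..L} \<Longrightarrow> (k, replicate k 0) \<in> nodes n L"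
proof -
  assume k: "k \<in> {1..L}"
  have "\<forall>j<k. replicate k 0 ! j < n (Suc j)"
  proof (intro allI impI)
    fix j assume j: "j < k"
    then have "Suc j \<in> {1..L}" using k by auto
    then have "n (Suc j) \<ge> 1" by (rule n_pos)
    then show "replicate k 0 ! j < n (Suc j)" using j by simp
  qed
  then show ?thesis using k by (simp add: nodes_def idx_def)
qed

lemma take_node: "i \<in> idx n L \<Longrightarrow> k \<in> {1..L} \<Longrightarrow> (k, take k i) \<in> nodes n L"
  using idx_take[of i n L k] by (auto simp: nodes_def)

lemma UU_val: "u \<in> UU n L \<Longrightarrow> c \<in> nodes n L \<Longrightarrow> u c = 1 \<or> u c = 2"
  by (auto simp: UU_def PiE_iff)

lemma UU_space: "u \<in> UU n L \<Longrightarrow> u \<in> space (MU n L)"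
  by (auto simp: UU_def space_MU PiE_iff)

lemma pairx_meas: "u \<in> UU n L \<Longrightarrow> (\<lambda>x. (x, u)) \<in> MX n L \<rightarrow>\<^sub>M M"
  unfolding SS_eq by (intro measurable_Pair measurable_ident_sets measurable_const UU_space) auto

lemma leaf0_eq:
  assumes u: "u \<in> UU n L"
  shows "leaf0 (x, u) = gg (\<lambda>j\<in>{1..L}. x ((j, replicate j 0), u (j, replicate j 0)))"
  using L1 by (simp add: musel_formula sel_def gg_def min_def)

lemma leaf0_law:
  assumes u: "u \<in> UU n L"
  shows "(\<integral>\<^sup>+x. ennreal \<bar>w - leaf0 (x, u)\<bar> \<partial>MX n L) = \<Phi> w"
proof -
  define s where "s j = ((j, replicate j (0::nat)), u (j, replicate j 0))" for j
  have s1: "inj_on s {1..L}" by (auto simp: s_def inj_on_def)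
  have s2: "s ` {1..L} \<subseteq> IX n L"
  proof
    fix d assume "d \<in> s ` {1..L}"
    then obtain j where j: "j \<in> {1..L}" "d = s j" by auto
    have nd: "(j, replicate j 0) \<in> nodes n L" by (rule rep_node[OF j(1)])
    have uv: "u (j, replicate j 0) = 1 \<or> u (j, replicate j 0) = 2" by (rule UU_val[OF u nd])
    show "d \<in> IX n L" using j nd uv by (auto simp: s_def IX_def)
  qed
  note s = s1 s2
  have "(\<integral>\<^sup>+x. ennreal \<bar>w - leaf0 (x, u)\<bar> \<partial>MX n L) = (\<integral>\<^sup>+x. ennreal \<bar>w - gg (\<lambda>j\<in>{1..L}. x (s j))\<bar> \<partial>PiM (IX n L) (\<lambda>_. Nd))"
    unfolding MX_def s_def leaf0_eq[OF u] ..
  also have "\<dots> = \<Phi> w"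
    unfolding \<Phi>_def by (rule MI_law[OF finite_IX s]) measurable
  finally show ?thesis .
qed

lemma card_weight: "of_nat (card (UU n L)) * ennreal ((1/2) ^ card (nodes n L)) = 1"
proof -
  have "of_nat (card (UU n L)) * ennreal ((1/2) ^ card (nodes n L)) = ennreal (real (card (UU n L))) * ennreal ((1/2) ^ card (nodes n L))"
    by (simp add: ennreal_of_nat_eq_real_of_nat)
  also have "\<dots> = ennreal (real (card (UU n L)) * (1/2) ^ card (nodes n L))"
    by (simp add: ennreal_mult)
  also have "real (card (UU n L)) = 2 ^ card (nodes n L)" by (simp add: card_UU)
  finally have "of_nat (card (UU n L)) * ennreal ((1/2) ^ card (nodes n L)) = ennreal (2 ^ card (nodes n L) * (1/2) ^ card (nodes n L))" .
  also have "2 ^ card (nodes n L) * (1/2) ^ card (nodes n L) = (1::real)" by (simp add: power_mult_distrib[symmetric])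
  finally show ?thesis by simp
qed

lemma pop_inner: "(\<integral>\<^sup>+\<omega>'. ennreal \<bar>w - leaf0 \<omega>'\<bar> \<partial>M) = \<Phi> w"
proof -
  have "(\<integral>\<^sup>+\<omega>'. ennreal \<bar>w - leaf0 \<omega>'\<bar> \<partial>M) = (\<Sum>u\<in>UU n L. \<integral>\<^sup>+x. ennreal \<bar>w - leaf0 (x, u)\<bar> \<partial>MX n L) * ennreal ((1/2)^card (nodes n L))"
    by (rule SS_nn) measurable
  also have "\<dots> = (\<Sum>u\<in>UU n L. \<Phi> w) * ennreal ((1/2)^card (nodes n L))"
    by (simp add: leaf0_law)
  also have "\<dots> = \<Phi> w * (of_nat (card (UU n L)) * ennreal ((1/2)^card (nodes n L)))"
    by (simp add: ac_simps)
  also have "\<dots> = \<Phi> w" by (simp add: card_weight)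
  finally show ?thesis .
qed

lemma pop_eq: "ennreal (popLoss n L \<theta> \<sigma> w) = \<Phi> w"
proof -
  have int: "integrable M (\<lambda>\<omega>'. \<bar>w - leaf0 \<omega>'\<bar>)"
  proof (rule int_by_Sabs[where a="\<bar>w\<bar> + \<bar>\<theta>\<bar>" and b=K0])
    fix \<omega> assume \<omega>: "\<omega> \<in> space M"
    show "\<bar>\<bar>w - leaf0 \<omega>\<bar>\<bar> \<le> \<bar>w\<bar> + \<bar>\<theta>\<bar> + K0 * Sabs n L \<omega>"
      using musel_bound[OF \<omega>, of "replicate L 0"] by simp
  qed measurable
  have "popLoss n L \<theta> \<sigma> w = (\<integral>\<omega>'. \<bar>w - leaf0 \<omega>'\<bar> \<partial>M)"
    unfolding popLoss_def by (subst integral_distr) auto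
  then have "ennreal (popLoss n L \<theta> \<sigma> w) = (\<integral>\<^sup>+\<omega>'. ennreal \<bar>w - leaf0 \<omega>'\<bar> \<partial>M)"
    using int by (simp add: nn_integral_eq_integral)
  then show ?thesis by (simp add: pop_inner)
qed

lemma W_fS:
  assumes u: "u \<in> UU n L" and xy: "\<And>d. d \<in> (\<lambda>c. (c, u c)) ` nodes n L \<Longrightarrow> x d = y d"
  shows "W (x, u) = W (y, u)"
  unfolding hypW_def
proof (intro arg_cong2[where f="(*)"] refl sum.cong)
  fix i assume i: "i \<in> idx n L"
  then have li: "length i = L" by (simp add: idx_def)
  show "musel \<theta> \<sigma> (x, u) L i = musel \<theta> \<sigma> (y, u) L i"
  proof -
    have "(\<Sum>k\<in>{1..L}. \<sigma> k * sel (x, u) k i) = (\<Sum>k\<in>{1..L}. \<sigma> k * sel (y, u) k i)"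
    proof (intro sum.cong refl)
      fix k assume k: "k \<in> {1..L}"
      have "((k, take k i), u (k, take k i)) \<in> (\<lambda>c. (c, u c)) ` nodes n L"
        using take_node[OF i k] by blast
      then have "x ((k, take k i), u (k, take k i)) = y ((k, take k i), u (k, take k i))" by (rule xy)
      then show "\<sigma> k * sel (x, u) k i = \<sigma> k * sel (y, u) k i" by (simp add: sel_def)
    qed
    then show ?thesis using L1 li by (simp add: musel_formula)
  qed
qed

lemma Z0_law:
  assumes u: "u \<in> UU n L" and i: "i \<in> idx n L"
  shows "(\<integral>\<^sup>+x. ennreal \<bar>W (x,u) - Zm 0 i (x,u)\<bar> \<partial>MX n L) = (\<integral>\<^sup>+x. \<Phi> (W (x,u)) \<partial>MX n L)"
proof -
  define S where "S = (\<lambda>c. (c, u c)) ` nodes n L"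
  define t where "t k = ((k, take k i), 3 - u (k, take k i))" for k
  have S: "S \<subseteq> IX n L" using UU_val[OF u] by (auto simp: S_def IX_def)
  have t: "inj_on t {1..L}" "t ` {1..L} \<subseteq> IX n L - S"
  proof -
    show "inj_on t {1..L}" by (auto simp: t_def inj_on_def)
    show "t ` {1..L} \<subseteq> IX n L - S"
    proof
      fix d assume "d \<in> t ` {1..L}"
      then obtain k where k: "k \<in> {1..L}" "d = t k" by auto
      have nd: "(k, take k i) \<in> nodes n L" by (rule take_node[OF i k(1)])
      have uv: "u (k, take k i) = 1 \<or> u (k, take k i) = 2" by (rule UU_val[OF u nd])
      show "d \<in> IX n L - S" using k nd uv by (auto simp: t_def IX_def S_def)
    qed
  qed
  have fm: "(\<lambda>x. W (x, u)) \<in> borel_measurable (PiM (IX n L) (\<lambda>_. Nd))"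
    using measurable_compose[OF pairx_meas[OF u] hypW_meas] by (simp add: MX_def)
  have Zeq: "Zm 0 i (x,u) = gg (\<lambda>j\<in>{1..L}. x (t j))" for x
    by (simp add: Zm_def gg_def t_def)
  have "(\<integral>\<^sup>+x. ennreal \<bar>W (x,u) - gg (\<lambda>j\<in>{1..L}. x (t j))\<bar> \<partial>PiM (IX n L) (\<lambda>_. Nd))
      = (\<integral>\<^sup>+x. (\<integral>\<^sup>+y. ennreal \<bar>W (x,u) - gg y\<bar> \<partial>PK) \<partial>PiM (IX n L) (\<lambda>_. Nd))"
    by (rule MI_indep[OF finite_IX S t fm _ gg_meas, where h="\<lambda>a b. ennreal \<bar>a - b\<bar>"])
       (auto intro: W_fS[OF u] simp: S_def)
  then show ?thesis unfolding MX_def Zeq \<Phi>_def .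
qed

lemma claimA:
  assumes i: "i \<in> idx n L"
  shows "(\<integral>\<^sup>+\<omega>. ennreal (popLoss n L \<theta> \<sigma> (W \<omega>)) \<partial>M) = (\<integral>\<^sup>+\<omega>. ennreal \<bar>W \<omega> - Zm 0 i \<omega>\<bar> \<partial>M)"
proof -
  have "(\<integral>\<^sup>+\<omega>. ennreal (popLoss n L \<theta> \<sigma> (W \<omega>)) \<partial>M) = (\<integral>\<^sup>+\<omega>. \<Phi> (W \<omega>) \<partial>M)"
    by (simp add: pop_eq)
  also have "\<dots> = (\<Sum>u\<in>UU n L. \<integral>\<^sup>+x. \<Phi> (W (x,u)) \<partial>MX n L) * ennreal ((1/2)^card (nodes n L))"
    by (rule SS_nn) measurable
  also have "\<dots> = (\<Sum>u\<in>UU n L. \<integral>\<^sup>+x. ennreal \<bar>W (x,u) - Zm 0 i (x,u)\<bar> \<partial>MX n L) * ennreal ((1/2)^card (nodes n L))"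
    using Z0_law[OF _ i] by simp
  also have "\<dots> = (\<integral>\<^sup>+\<omega>. ennreal \<bar>W \<omega> - Zm 0 i \<omega>\<bar> \<partial>M)"
    by (rule SS_nn[symmetric]) measurable
  finally show ?thesis .
qed

end


context part3
begin

lemma pop_real: "popLoss n L \<theta> \<sigma> w = enn2real (\<Phi> w)"
proof -
  have "popLoss n L \<theta> \<sigma> w \<ge> 0" unfolding popLoss_def by (rule integral_nonneg_AE) auto
  then show ?thesis using pop_eq[of w] by (metis enn2real_ennreal)
qed

lemma pop_meas[measurable]: "(\<lambda>\<omega>. popLoss n L \<theta> \<sigma> (W \<omega>)) \<in> borel_measurable M"
  unfolding pop_real by measurable

lemma idx_ne: "idx n L \<noteq> {}"
  using card_idx[of n L] NL_pos by auto

lemma part3_bound: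
  "(\<integral>\<omega>. popLoss n L \<theta> \<sigma> (W \<omega>) - empLoss n L \<theta> \<sigma> (W \<omega>) \<omega> \<partial>M)
     \<le> 2 / sqrt pi * (\<Sum>l\<in>{1..L}. \<sigma> l / real (NN n l))"
proof -
  interpret prob_space M by (rule prob_SS)
  define Bv where "Bv = (\<Sum>m\<in>{1..L}. \<beta> m)"
  have Bv: "Bv = 2 / sqrt pi * (\<Sum>l\<in>{1..L}. \<sigma> l / real (NN n l))"
    unfolding Bv_def \<beta>_def by (simp add: sum_distrib_left)
  have Bv_nn: "Bv \<ge> 0" unfolding Bv_def by (intro sum_nonneg beta_nonneg) auto
  define e where "e i = (\<integral>\<omega>. \<bar>W \<omega> - Zm L i \<omega>\<bar> \<partial>M)" for i
  define p where "p = (\<integral>\<omega>. popLoss n L \<theta> \<sigma> (W \<omega>) \<partial>M)"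
  obtain i0 where i0: "i0 \<in> idx n L" using idx_ne by auto
  have pop_nn: "(\<integral>\<^sup>+\<omega>. ennreal (popLoss n L \<theta> \<sigma> (W \<omega>)) \<partial>M) = ennreal (\<integral>\<omega>. \<bar>W \<omega> - Zm 0 i0 \<omega>\<bar> \<partial>M)"
    using claimA[OF i0] int_WZ[of 0 i0] by (simp add: nn_integral_eq_integral)
  have pop_ge: "\<And>\<omega>. popLoss n L \<theta> \<sigma> (W \<omega>) \<ge> 0" by (simp add: pop_real)
  have pop_int: "integrable M (\<lambda>\<omega>. popLoss n L \<theta> \<sigma> (W \<omega>))"
    by (rule integrableI_nn_integral_finite[OF pop_meas _ pop_nn]) (simp add: pop_ge)
  have p_nn: "(\<integral>\<^sup>+\<omega>. ennreal (popLoss n L \<theta> \<sigma> (W \<omega>)) \<partial>M) = ennreal p"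
    unfolding p_def using pop_int pop_ge by (simp add: nn_integral_eq_integral)
  have key: "p \<le> e i + Bv" if i: "i \<in> idx n L" for i
  proof -
    have e_nn: "(\<integral>\<^sup>+\<omega>. ennreal \<bar>W \<omega> - Zm L i \<omega>\<bar> \<partial>M) = ennreal (e i)"
      unfolding e_def using int_WZ[of L i] by (simp add: nn_integral_eq_integral)
    have "ennreal p = (\<integral>\<^sup>+\<omega>. ennreal \<bar>W \<omega> - Zm 0 i \<omega>\<bar> \<partial>M)" using p_nn claimA[OF i] by simp
    also have "\<dots> \<le> (\<integral>\<^sup>+\<omega>. ennreal \<bar>W \<omega> - Zm L i \<omega>\<bar> \<partial>M) + ennreal Bv"
      unfolding Bv_def by (rule telescope[OF i]) simp
    also have "\<dots> = ennreal (e i + Bv)"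
      using e_nn Bv_nn by (simp add: ennreal_plus e_def)
    finally show ?thesis using Bv_nn by (subst (asm) ennreal_le_iff) (auto simp: e_def)
  qed
  have emp_eq: "empLoss n L \<theta> \<sigma> (W \<omega>) \<omega> = (1 / real (NN n L)) * (\<Sum>i\<in>idx n L. \<bar>W \<omega> - Zm L i \<omega>\<bar>)" for \<omega>
    unfolding empLoss_def by (intro arg_cong2[where f="(*)"] refl sum.cong) (simp_all add: ZL)
  have emp_int: "integrable M (\<lambda>\<omega>. empLoss n L \<theta> \<sigma> (W \<omega>) \<omega>)"
    unfolding emp_eq by (intro integrable_mult_right Bochner_Integration.integrable_sum int_WZ)
  have emp_val: "(\<integral>\<omega>. empLoss n L \<theta> \<sigma> (W \<omega>) \<omega> \<partial>M) = (1 / real (NN n L)) * (\<Sum>i\<in>idx n L. e i)"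
    unfolding emp_eq e_def by (simp add: Bochner_Integration.integral_sum int_WZ)
  have "p = (1 / real (NN n L)) * (\<Sum>i\<in>idx n L. p)"
    using NL_pos by (simp add: card_idx)
  also have "\<dots> \<le> (1 / real (NN n L)) * (\<Sum>i\<in>idx n L. e i + Bv)"
    using NL_pos key by (intro mult_left_mono sum_mono) auto
  also have "\<dots> = (\<integral>\<omega>. empLoss n L \<theta> \<sigma> (W \<omega>) \<omega> \<partial>M) + Bv"
    using NL_pos by (simp add: emp_val sum.distrib card_idx distrib_left)
  finally have "p \<le> (\<integral>\<omega>. empLoss n L \<theta> \<sigma> (W \<omega>) \<omega> \<partial>M) + Bv" .
  moreover have "(\<integral>\<omega>. popLoss n L \<theta> \<sigma> (W \<omega>) - empLoss n L \<theta> \<sigma> (W \<omega>) \<omega> \<partial>M) = p - (\<integral>\<omega>. empLoss n L \<theta> \<sigma> (W \<omega>) \<omega> \<partial>M)"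
    unfolding p_def using pop_int emp_int by (rule Bochner_Integration.integral_diff)
  ultimately show ?thesis using Bv by simp
qed

end


theorem mainTheorem10:
  fixes n :: "nat \<Rightarrow> nat" and L :: nat and \<theta> :: real and \<sigma> :: "nat \<Rightarrow> real"
  assumes L1: "L \<ge> 1"
    and n_pos: "\<And>k. k \<in> {1..L} \<Longrightarrow> n k \<ge> 1"
    and \<sigma>_pos: "\<And>k. k \<in> {1..L} \<Longrightarrow> \<sigma> k > 0"
  shows
    "(\<forall>l\<in>{1..L}. \<forall>is\<in>idx n l. \<forall>\<kappa>1 \<kappa>2.
        is_cond_law (supersample_space n L) SXU (XU \<theta> \<sigma> l is) (hypW n L \<theta> \<sigma>) \<kappa>1 \<longrightarrow>
        is_cond_law (supersample_space n L) SXT (XT \<theta> \<sigma> l is) (hypW n L \<theta> \<sigma>) \<kappa>2 \<longrightarrow>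
        (\<integral>\<^sup>+ x. wasserstein1 (\<kappa>1 x) (\<kappa>2 (fst x)) \<partial>(distr (supersample_space n L) SXU (XU \<theta> \<sigma> l is)))
          \<le> ennreal (\<sigma> l / (sqrt pi * real (NN n l))))
   \<and> (\<forall>\<kappa>1 \<kappa>2.
        (\<forall>l\<in>{1..L}. \<forall>is\<in>idx n l.
           is_cond_law (supersample_space n L) SXU (XU \<theta> \<sigma> l is) (hypW n L \<theta> \<sigma>) (\<kappa>1 l is) \<and>
           is_cond_law (supersample_space n L) SXT (XT \<theta> \<sigma> l is) (hypW n L \<theta> \<sigma>) (\<kappa>2 l is)) \<longrightarrow>
        2 * (\<Sum>l\<in>{1..L}. ennreal (1 / real (NN n l)) *
               (\<Sum>is\<in>idx n l. \<integral>\<^sup>+ x. wasserstein1 (\<kappa>1 l is x) (\<kappa>2 l is (fst x))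
                                 \<partial>(distr (supersample_space n L) SXU (XU \<theta> \<sigma> l is))))
          \<le> ennreal (2 / sqrt pi * (\<Sum>l\<in>{1..L}. \<sigma> l / real (NN n l))))
   \<and> (\<integral> \<omega>. popLoss n L \<theta> \<sigma> (hypW n L \<theta> \<sigma> \<omega>) - empLoss n L \<theta> \<sigma> (hypW n L \<theta> \<sigma> \<omega>) \<omega>
          \<partial>(supersample_space n L))
       \<le> 2 / sqrt pi * (\<Sum>l\<in>{1..L}. \<sigma> l / real (NN n l))"
proof -
  have P1: "\<forall>l\<in>{1..L}. \<forall>is\<in>idx n l. \<forall>\<kappa>1 \<kappa>2.
        is_cond_law (supersample_space n L) SXU (XU \<theta> \<sigma> l is) (hypW n L \<theta> \<sigma>) \<kappa>1 \<longrightarrow>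
        is_cond_law (supersample_space n L) SXT (XT \<theta> \<sigma> l is) (hypW n L \<theta> \<sigma>) \<kappa>2 \<longrightarrow>
        (\<integral>\<^sup>+ x. wasserstein1 (\<kappa>1 x) (\<kappa>2 (fst x)) \<partial>(distr (supersample_space n L) SXU (XU \<theta> \<sigma> l is)))
          \<le> ennreal (\<sigma> l / (sqrt pi * real (NN n l)))"
  proof (intro ballI allI impI)
    fix l ix \<kappa>1 \<kappa>2
    assume l: "l \<in> {1..L}" and ix: "ix \<in> idx n l"
      and c1: "is_cond_law (supersample_space n L) SXU (XU \<theta> \<sigma> l ix) (hypW n L \<theta> \<sigma>) \<kappa>1"
      and c2: "is_cond_law (supersample_space n L) SXT (XT \<theta> \<sigma> l ix) (hypW n L \<theta> \<sigma>) \<kappa>2"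
    interpret part1k n L \<theta> \<sigma> l ix \<kappa>1 \<kappa>2
      using l ix c1 c2 n_pos \<sigma>_pos[OF l] by unfold_locales auto
    show "(\<integral>\<^sup>+ x. wasserstein1 (\<kappa>1 x) (\<kappa>2 (fst x)) \<partial>(distr (supersample_space n L) SXU (XU \<theta> \<sigma> l ix)))
          \<le> ennreal (\<sigma> l / (sqrt pi * real (NN n l)))" by (rule part1_bound)
  qed
  have P2: "\<forall>\<kappa>1 \<kappa>2.
        (\<forall>l\<in>{1..L}. \<forall>is\<in>idx n l.
           is_cond_law (supersample_space n L) SXU (XU \<theta> \<sigma> l is) (hypW n L \<theta> \<sigma>) (\<kappa>1 l is) \<and>
           is_cond_law (supersample_space n L) SXT (XT \<theta> \<sigma> l is) (hypW n L \<theta> \<sigma>) (\<kappa>2 l is)) \<longrightarrow>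
        2 * (\<Sum>l\<in>{1..L}. ennreal (1 / real (NN n l)) *
               (\<Sum>is\<in>idx n l. \<integral>\<^sup>+ x. wasserstein1 (\<kappa>1 l is x) (\<kappa>2 l is (fst x))
                                 \<partial>(distr (supersample_space n L) SXU (XU \<theta> \<sigma> l is))))
          \<le> ennreal (2 / sqrt pi * (\<Sum>l\<in>{1..L}. \<sigma> l / real (NN n l)))"
  proof (intro allI impI)
    fix \<kappa>1 \<kappa>2
    assume H: "\<forall>l\<in>{1..L}. \<forall>is\<in>idx n l.
           is_cond_law (supersample_space n L) SXU (XU \<theta> \<sigma> l is) (hypW n L \<theta> \<sigma>) (\<kappa>1 l is) \<and>
           is_cond_law (supersample_space n L) SXT (XT \<theta> \<sigma> l is) (hypW n L \<theta> \<sigma>) (\<kappa>2 l is)"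
    define I where "I l ix = (\<integral>\<^sup>+ x. wasserstein1 (\<kappa>1 l ix x) (\<kappa>2 l ix (fst x))
                                 \<partial>(distr (supersample_space n L) SXU (XU \<theta> \<sigma> l ix)))" for l ix
    have b: "I l ix \<le> ennreal (\<sigma> l / (sqrt pi * real (NN n l)))" if l: "l \<in> {1..L}" and ix: "ix \<in> idx n l" for l ix
      using P1 H l ix unfolding I_def by blast
    have Npos: "real (NN n l) > 0" if "l \<in> {1..L}" for l using NN_pos[OF n_pos, of l] that by simp
    have "(\<Sum>l\<in>{1..L}. ennreal (1 / real (NN n l)) * (\<Sum>ix\<in>idx n l. I l ix))
        \<le> (\<Sum>l\<in>{1..L}. ennreal (1 / real (NN n l)) * (\<Sum>ix\<in>idx n l. ennreal (\<sigma> l / (sqrt pi * real (NN n l)))))"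
      using b by (intro sum_mono mult_left_mono) auto
    also have "\<dots> = (\<Sum>l\<in>{1..L}. ennreal (\<sigma> l / sqrt pi / real (NN n l)))"
    proof (intro sum.cong refl)
      fix l assume l: "l \<in> {1..L}"
      have c0: "\<sigma> l / (sqrt pi * real (NN n l)) \<ge> 0" using \<sigma>_pos[OF l] Npos[OF l] by simp
      have "(\<Sum>ix\<in>idx n l. ennreal (\<sigma> l / (sqrt pi * real (NN n l)))) = ennreal (\<Sum>ix\<in>idx n l. \<sigma> l / (sqrt pi * real (NN n l)))"
        using c0 by (rule sum_ennreal)
      also have "(\<Sum>ix\<in>idx n l. \<sigma> l / (sqrt pi * real (NN n l))) = real (NN n l) * (\<sigma> l / (sqrt pi * real (NN n l)))"
        by (simp add: card_idx)
      finally have "ennreal (1 / real (NN n l)) * (\<Sum>ix\<in>idx n l. ennreal (\<sigma> l / (sqrt pi * real (NN n l))))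
          = ennreal (1 / real (NN n l)) * ennreal (real (NN n l) * (\<sigma> l / (sqrt pi * real (NN n l))))" by simp
      also have "\<dots> = ennreal (1 / real (NN n l) * (real (NN n l) * (\<sigma> l / (sqrt pi * real (NN n l)))))"
        using c0 Npos[OF l] \<sigma>_pos[OF l] by (intro ennreal_mult[symmetric]) auto
      also have "1 / real (NN n l) * (real (NN n l) * (\<sigma> l / (sqrt pi * real (NN n l)))) = \<sigma> l / sqrt pi / real (NN n l)"
        using Npos[OF l] by (simp add: field_simps)
      finally show "ennreal (1 / real (NN n l)) * (\<Sum>ix\<in>idx n l. ennreal (\<sigma> l / (sqrt pi * real (NN n l)))) = ennreal (\<sigma> l / sqrt pi / real (NN n l))" .
    qed
    also have "\<dots> = ennreal (\<Sum>l\<in>{1..L}. \<sigma> l / sqrt pi / real (NN n l))"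
      using \<sigma>_pos Npos by (intro sum_ennreal) (auto intro!: divide_nonneg_nonneg less_imp_le)
    finally have s: "(\<Sum>l\<in>{1..L}. ennreal (1 / real (NN n l)) * (\<Sum>ix\<in>idx n l. I l ix)) \<le> ennreal (\<Sum>l\<in>{1..L}. \<sigma> l / sqrt pi / real (NN n l))" .
    have nn: "(\<Sum>l\<in>{1..L}. \<sigma> l / sqrt pi / real (NN n l)) \<ge> 0"
      using \<sigma>_pos Npos by (intro sum_nonneg) (auto intro!: divide_nonneg_nonneg less_imp_le)
    have "2 * (\<Sum>l\<in>{1..L}. ennreal (1 / real (NN n l)) * (\<Sum>ix\<in>idx n l. I l ix)) \<le> 2 * ennreal (\<Sum>l\<in>{1..L}. \<sigma> l / sqrt pi / real (NN n l))"
      using s by (rule mult_left_mono) simp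
    also have "\<dots> = ennreal (2 / sqrt pi * (\<Sum>l\<in>{1..L}. \<sigma> l / real (NN n l)))"
    proof -
      have e1: "(\<Sum>l\<in>{1..L}. \<sigma> l / sqrt pi / real (NN n l)) = (1 / sqrt pi) * (\<Sum>l\<in>{1..L}. \<sigma> l / real (NN n l))"
        by (simp add: sum_distrib_left)
      have "2 * ennreal (\<Sum>l\<in>{1..L}. \<sigma> l / sqrt pi / real (NN n l)) = ennreal 2 * ennreal (\<Sum>l\<in>{1..L}. \<sigma> l / sqrt pi / real (NN n l))"
        by simp
      also have "\<dots> = ennreal (2 * (\<Sum>l\<in>{1..L}. \<sigma> l / sqrt pi / real (NN n l)))"
        by (rule ennreal_mult[symmetric]) (use nn in auto)
      also have "2 * (\<Sum>l\<in>{1..L}. \<sigma> l / sqrt pi / real (NN n l)) = 2 / sqrt pi * (\<Sum>l\<in>{1..L}. \<sigma> l / real (NN n l))"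
        unfolding e1 by simp
      finally show ?thesis .
    qed
    finally show "2 * (\<Sum>l\<in>{1..L}. ennreal (1 / real (NN n l)) *
               (\<Sum>is\<in>idx n l. \<integral>\<^sup>+ x. wasserstein1 (\<kappa>1 l is x) (\<kappa>2 l is (fst x))
                                 \<partial>(distr (supersample_space n L) SXU (XU \<theta> \<sigma> l is))))
          \<le> ennreal (2 / sqrt pi * (\<Sum>l\<in>{1..L}. \<sigma> l / real (NN n l)))" unfolding I_def .
  qed
  interpret part3 n L \<theta> \<sigma> using L1 n_pos \<sigma>_pos by unfold_locales auto
  have P3: "(\<integral> \<omega>. popLoss n L \<theta> \<sigma> (hypW n L \<theta> \<sigma> \<omega>) - empLoss n L \<theta> \<sigma> (hypW n L \<theta> \<sigma> \<omega>) \<omega>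
          \<partial>(supersample_space n L))
       \<le> 2 / sqrt pi * (\<Sum>l\<in>{1..L}. \<sigma> l / real (NN n l))" by (rule part3_bound)
  show ?thesis using P1 P2 P3 by blast
qed


end
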